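(* Consider the setting and certainty-equivalent controller described in the context, and let $e_k=x_k-\hat{x}_k$ and $\tilde{e}_k=\check{x}_k-\hat{x}_k$ with $\check{x}_k=\mathbb{E}[x_k\mid\mathcal{I}^e_k]$. Then, for $k\in\mathcal{K}$, with $\delta_k$ the transmission decision at time $k$, $$\mathbb{E}[e_{k+1}\mid\mathcal{I}^e_k]=(1-\delta_k)A\tilde{e}_k,\qquad \mathrm{Cov}[e_{k+1}\mid\mathcal{I}^e_k]=\sum_{t=0}^{\zeta_k}A^tW(A^t)^T.$$
   Context: Let $n,m\ge 1$, $N\in\mathbb{N}$, $\mathcal{K}=\{0,1,\dots,N\}$. A process evolves as $x_{k+1}=Ax_k+Bu_k+w_k$ with output $y_k=x_{k-\tau_k}$, where $A\in\mathbb{R}^{n\times n}$, $B\in\mathbb{R}^{n\times m}$, $w_k$ is Gaussian white noise with zero mean and covariance $W\succ0$, $x_0$ is Gaussian with mean $m_0$ and covariance $M_0$, $\tau_k\in\mathbb{N}_0$ are random delays with known distribution and $\tau_0=0$, all mutually independent. An event trigger chooses $\delta_k\in\{0,1\}$ (transmission to the controller, received at time $k+1$). Ages of information: at the event trigger $\zeta_0=0$, $\zeta_k=\tau_k$ if $\tau_k<\zeta_{k-1}+1$ and $\zeta_k=\zeta_{k-1}+1$ otherwise; at the controller $\eta_0=\infty$, $\eta_k=\zeta_{k-1}+1$ if $\delta_{k-1}=1$ and $\eta_k=\eta_{k-1}+1$ otherwise. The event trigger's information set is $\mathcal{I}^e_k=\{x_{t-\zeta_t},x_{t-\eta_t},\delta_s,u_s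 : 0\le t\le k,\ 0\le s<k\}$ (infinite-age entries void), and admissible triggering policies are Borel measurable kernels $\mathbb{P}(\delta_k\mid\mathcal{I}^e_k)$. Let $Q\succeq0$, $R\succ0$, $S_{N+1}=Q$, $S_k=Q+A^TS_{k+1}A-A^TS_{k+1}B(B^TS_{k+1}B+R)^{-1}B^TS_{k+1}A$, $L_k=(B^TS_{k+1}B+R)^{-1}B^TS_{k+1}A$. The controller applies $u_k=-L_k\hat{x}_k$, where $\hat{x}_0=m_0$ and $\hat{x}_{k+1}=A^{\zeta_k+1}x_{k-\zeta_k}+\sum_{t=0}^{\zeta_k}A^tBu_{k-t}$ if $\delta_k=1$, and $\hat{x}_{k+1}=A\hat{x}_k+Bu_k$ if $\delta_k=0$. *)

theory Defs
  imports "HOL-Probability.Probability"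
begin

text \<open>Matrix power (note: the ring power on vec types is componentwise, not matrix power).\<close>
fun matpow :: "real^'n^'n \<Rightarrow> nat \<Rightarrow> real^'n^'n" where
  "matpow A 0 = mat 1"
| "matpow A (Suc t) = A ** matpow A t"

definition psd_mat :: "real^'n^'n \<Rightarrow> bool" where
  "psd_mat S \<longleftrightarrow> transpose S = S \<and> (\<forall>v. 0 \<le> v \<bullet> (S *v v))"

definition pd_mat :: "real^'n^'n \<Rightarrow> bool" where
  "pd_mat S \<longleftrightarrow> transpose S = S \<and> (\<forall>v. v \<noteq> 0 \<longrightarrow> 0 < v \<bullet> (S *v v))"

text \<open>Riccati recursion: ric j = S_{N+1-j}, i.e. S_{N+1} = Q and
  S_k = Q + A^T S_{k+1} A - A^T S_{k+1} B (B^T S_{k+1} B + R)^{-1} B^T S_{k+1} A.\<close>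
fun ric :: "real^'n^'n \<Rightarrow> real^'m^'n \<Rightarrow> real^'n^'n \<Rightarrow> real^'m^'m \<Rightarrow> nat \<Rightarrow> real^'n^'n" where
  "ric A B Q R 0 = Q"
| "ric A B Q R (Suc j) =
     (let P = ric A B Q R j in
       Q + transpose A ** P ** A
         - transpose A ** P ** B ** matrix_inv (transpose B ** P ** B + R) ** transpose B ** P ** A)"

definition riccati_S :: "real^'n^'n \<Rightarrow> real^'m^'n \<Rightarrow> real^'n^'n \<Rightarrow> real^'m^'m \<Rightarrow> nat \<Rightarrow> nat \<Rightarrow> real^'n^'n" where
  "riccati_S A B Q R N k = ric A B Q R (N + 1 - k)"

definition gain_L :: "real^'n^'n \<Rightarrow> real^'m^'n \<Rightarrow> real^'n^'n \<Rightarrow> real^'m^'m \<Rightarrow> nat \<Rightarrow> nat \<Rightarrow> real^'n^'m" where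
  "gain_L A B Q R N k =
     (let S = riccati_S A B Q R N (Suc k) in
       matrix_inv (transpose B ** S ** B + R) ** transpose B ** S ** A)"

text \<open>Age of information at the event trigger (zeta), from the delays tau.\<close>
fun zeta :: "(nat \<Rightarrow> 'a \<Rightarrow> nat) \<Rightarrow> nat \<Rightarrow> 'a \<Rightarrow> nat" where
  "zeta \<tau> 0 \<omega> = 0"
| "zeta \<tau> (Suc k) \<omega> =
     (if \<tau> (Suc k) \<omega> < zeta \<tau> k \<omega> + 1 then \<tau> (Suc k) \<omega> else zeta \<tau> k \<omega> + 1)"

text \<open>Age of information at the controller (eta), infinite at time 0.\<close>
fun eta :: "(nat \<Rightarrow> 'a \<Rightarrow> bool) \<Rightarrow> (nat \<Rightarrow> 'a \<Rightarrow> nat) \<Rightarrow> nat \<Rightarrow> 'a \<Rightarrow> enat" where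
  "eta \<delta> \<tau> 0 \<omega> = \<infinity>"
| "eta \<delta> \<tau> (Suc k) \<omega> =
     (if \<delta> k \<omega> then enat (zeta \<tau> k \<omega> + 1) else eta \<delta> \<tau> k \<omega> + 1)"

definition rv_sets :: "'a measure \<Rightarrow> 'b measure \<Rightarrow> ('a \<Rightarrow> 'b) \<Rightarrow> 'a set set" where
  "rv_sets M N X = {X -` A \<inter> space M | A. A \<in> sets N}"

text \<open>Generators of the sigma-algebra of the event-trigger information set I^e_k:
  the received measurements x_{t - zeta_t} (with their ages), the controller-side
  measurements x_{t - eta_t} (with their ages; void if eta_t is infinite), and the
  past decisions delta_s and inputs u_s, s < k.\<close>
definition info_sets ::
  "'a measure \<Rightarrow> (nat \<Rightarrow> 'a \<Rightarrow> real^'n) \<Rightarrow> (nat \<Rightarrow> 'a \<Rightarrow> real^'m)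
   \<Rightarrow> (nat \<Rightarrow> 'a \<Rightarrow> bool) \<Rightarrow> (nat \<Rightarrow> 'a \<Rightarrow> nat) \<Rightarrow> nat \<Rightarrow> 'a set set" where
  "info_sets M x u \<delta> \<tau> k =
     (\<Union>t\<in>{..k}.
        rv_sets M (count_space UNIV) (zeta \<tau> t)
      \<union> rv_sets M borel (\<lambda>\<omega>. x (t - zeta \<tau> t \<omega>) \<omega>)
      \<union> rv_sets M (count_space UNIV) (eta \<delta> \<tau> t)
      \<union> rv_sets M borel (\<lambda>\<omega>. case eta \<delta> \<tau> t \<omega> of enat j \<Rightarrow> x (t - j) \<omega> | \<infinity> \<Rightarrow> 0))
   \<union> (\<Union>s\<in>{..<k}. rv_sets M (count_space UNIV) (\<delta> s) \<union> rv_sets M borel (u s))"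

definition info_alg ::
  "'a measure \<Rightarrow> (nat \<Rightarrow> 'a \<Rightarrow> real^'n) \<Rightarrow> (nat \<Rightarrow> 'a \<Rightarrow> real^'m)
   \<Rightarrow> (nat \<Rightarrow> 'a \<Rightarrow> bool) \<Rightarrow> (nat \<Rightarrow> 'a \<Rightarrow> nat) \<Rightarrow> nat \<Rightarrow> 'a measure" where
  "info_alg M x u \<delta> \<tau> k = sigma (space M) (info_sets M x u \<delta> \<tau> k)"

definition cond_exp_vec :: "'a measure \<Rightarrow> 'a measure \<Rightarrow> ('a \<Rightarrow> real^'n) \<Rightarrow> 'a \<Rightarrow> real^'n" where
  "cond_exp_vec M F X \<omega> = (\<chi> i. real_cond_exp M F (\<lambda>\<omega>'. X \<omega>' $ i) \<omega>)"

definition cond_cov :: "'a measure \<Rightarrow> 'a measure \<Rightarrow> ('a \<Rightarrow> real^'n) \<Rightarrow> 'a \<Rightarrow> real^'n^'n" where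
  "cond_cov M F X \<omega> =
     (\<chi> i j. real_cond_exp M F
        (\<lambda>\<omega>'. (X \<omega>' $ i - cond_exp_vec M F X \<omega>' $ i) * (X \<omega>' $ j - cond_exp_vec M F X \<omega>' $ j)) \<omega>)"

text \<open>Gaussian random vector with mean m and covariance S (Cramer--Wold definition:
  every linear functional is (possibly degenerate) normal).\<close>
definition gaussian_vec :: "'a measure \<Rightarrow> ('a \<Rightarrow> real^'n) \<Rightarrow> real^'n \<Rightarrow> real^'n^'n \<Rightarrow> bool" where
  "gaussian_vec M X m S \<longleftrightarrow> psd_mat S \<and> X \<in> borel_measurable M \<and>
     (\<forall>v. let \<mu> = v \<bullet> m; s2 = v \<bullet> (S *v v) in
        (if s2 = 0 then distr M borel (\<lambda>\<omega>. v \<bullet> X \<omega>) = return borel \<mu>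
         else distributed M lborel (\<lambda>\<omega>. v \<bullet> X \<omega>) (normal_density \<mu> (sqrt s2))))"

text \<open>Primitive random variables: initial state, process noise, delays, and the
  randomisation variables realising the (randomised) triggering kernel.\<close>
datatype prim_idx = PX0 | PW nat | PTau nat | PNu nat

definition prim_sets ::
  "'a measure \<Rightarrow> ('a \<Rightarrow> real^'n) \<Rightarrow> (nat \<Rightarrow> 'a \<Rightarrow> real^'n) \<Rightarrow> (nat \<Rightarrow> 'a \<Rightarrow> nat)
   \<Rightarrow> (nat \<Rightarrow> 'a \<Rightarrow> real) \<Rightarrow> prim_idx \<Rightarrow> 'a set set" where
  "prim_sets M x0 w \<tau> \<nu> i = (case i of
       PX0 \<Rightarrow> rv_sets M borel x0
     | PW k \<Rightarrow> rv_sets M borel (w k)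
     | PTau k \<Rightarrow> rv_sets M (count_space UNIV) (\<tau> k)
     | PNu k \<Rightarrow> rv_sets M borel (\<nu> k))"

end

theory Submission
  imports Defs
begin

lemma cnt1:
  fixes f :: "'a \<Rightarrow> 'b::countable"
  assumes "f \<in> R \<rightarrow>\<^sub>M count_space UNIV" "space N = UNIV"
  shows "(\<lambda>\<omega>. h (f \<omega>)) \<in> R \<rightarrow>\<^sub>M N"
  using measurable_compose_countable[where f="\<lambda>i \<omega>. h i" and g=f and N=N] assms by auto

lemma cnt2:
  fixes f :: "'a \<Rightarrow> 'b::countable" and g :: "'a \<Rightarrow> 'c::countable"
  assumes "f \<in> R \<rightarrow>\<^sub>M count_space UNIV" "g \<in> R \<rightarrow>\<^sub>M count_space UNIV" "space N = UNIV"
  shows "(\<lambda>\<omega>. h (f \<omega>) (g \<omega>)) \<in> R \<rightarrow>\<^sub>M N"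
proof -
  have "\<And>i. (\<lambda>\<omega>. h i (g \<omega>)) \<in> R \<rightarrow>\<^sub>M N" using cnt1[OF assms(2,3)] .
  then show ?thesis using measurable_compose_countable[where f="\<lambda>i \<omega>. h i (g \<omega>)" and g=f] assms(1) by auto
qed

lemma rv_gen_meas:
  assumes "E \<subseteq> Pow \<Omega>" "rv_sets M N Y \<subseteq> E" "space M = \<Omega>" "space N = UNIV"
  shows "Y \<in> sigma \<Omega> E \<rightarrow>\<^sub>M N"
proof (rule measurableI)
  fix x assume "x \<in> space (sigma \<Omega> E)" then show "Y x \<in> space N" using assms by simp
next
  fix A assume "A \<in> sets N"
  then have "Y -` A \<inter> \<Omega> \<in> E" using assms unfolding rv_sets_def by auto
  then show "Y -` A \<inter> space (sigma \<Omega> E) \<in> sets (sigma \<Omega> E)"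
    using assms(1) by (simp add: sigma_sets.Basic)
qed

lemma id_meas_sigma:
  assumes "E \<subseteq> Pow \<Omega>" "space R \<subseteq> \<Omega>" "\<And>G. G \<in> E \<Longrightarrow> G \<inter> space R \<in> sets R"
  shows "(\<lambda>\<omega>. \<omega>) \<in> R \<rightarrow>\<^sub>M sigma \<Omega> E"
  using assms by (intro measurable_measure_of) (auto simp: Int_commute)

lemma rv_sets_trace:
  assumes "Y \<in> R \<rightarrow>\<^sub>M N" "space R \<subseteq> space M" "G \<in> rv_sets M N Y"
  shows "G \<inter> space R \<in> sets R"
proof -
  obtain A where A: "A \<in> sets N" "G = Y -` A \<inter> space M" using assms(3) unfolding rv_sets_def by auto
  have "G \<inter> space R = Y -` A \<inter> space R" using A assms(2) by auto
  then show ?thesis using measurable_sets[OF assms(1) A(1)] by simp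
qed

lemma rv_sets_Pow: "rv_sets M N Y \<subseteq> Pow (space M)"
  unfolding rv_sets_def by auto

lemma rv_sets_Int_stable: "Int_stable (rv_sets M N Y)"
  unfolding Int_stable_def rv_sets_def
proof (safe)
  fix A B assume "A \<in> sets N" "B \<in> sets N"
  then show "\<exists>C. (Y -` A \<inter> space M) \<inter> (Y -` B \<inter> space M) = Y -` C \<inter> space M \<and> C \<in> sets N"
    by (intro exI[of _ "A \<inter> B"]) auto
qed

lemma info_sets_Pow: "info_sets M x u \<delta> \<tau> k \<subseteq> Pow (space M)"
  unfolding info_sets_def rv_sets_def by auto

section \<open>Ages\<close>

lemma zeta_le: "zeta \<tau> t \<omega> \<le> t"
  by (induction t) auto

lemma zeta_Suc_le: "zeta \<tau> (Suc t) \<omega> \<le> zeta \<tau> t \<omega> + 1"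
  by simp

lemma zeta_gap: "t \<le> j \<Longrightarrow> t - zeta \<tau> t \<omega> \<le> j - zeta \<tau> j \<omega>"
proof (induction j)
  case 0 then show ?case by simp
next
  case (Suc j)
  show ?case
  proof (cases "t = Suc j")
    case False
    then have "t - zeta \<tau> t \<omega> \<le> j - zeta \<tau> j \<omega>" using Suc by auto
    moreover have "zeta \<tau> j \<omega> \<le> j" by (rule zeta_le)
    moreover have "zeta \<tau> (Suc j) \<omega> \<le> zeta \<tau> j \<omega> + 1" by (rule zeta_Suc_le)
    ultimately show ?thesis by linarith
  qed simp
qed

lemma eta_ge: "enat (zeta \<tau> t \<omega>) \<le> eta \<delta> \<tau> t \<omega>"
proof (induction t)
  case 0 then show ?case by simp
next
  case (Suc t)
  have z: "zeta \<tau> (Suc t) \<omega> \<le> zeta \<tau> t \<omega> + 1" by (rule zeta_Suc_le)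
  show ?case
  proof (cases "\<delta> t \<omega>")
    case True then show ?thesis using z by simp
  next
    case False
    have "enat (zeta \<tau> (Suc t) \<omega>) \<le> enat (zeta \<tau> t \<omega>) + 1" using z by (simp add: one_enat_def)
    also have "\<dots> \<le> eta \<delta> \<tau> t \<omega> + 1" using Suc by (simp add: add_right_mono)
    finally show ?thesis using False by simp
  qed
qed

lemma zeta_meas:
  assumes "\<And>i. \<tau> i \<in> R \<rightarrow>\<^sub>M count_space UNIV"
  shows "zeta \<tau> t \<in> R \<rightarrow>\<^sub>M count_space UNIV"
proof (induction t)
  case 0 then show ?case by simp
next
  case (Suc t)
  have "(\<lambda>\<omega>. (\<lambda>a b. if a < b + 1 then a else b + 1) (\<tau> (Suc t) \<omega>) (zeta \<tau> t \<omega>)) \<in> R \<rightarrow>\<^sub>M count_space UNIV"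
    by (rule cnt2[OF assms Suc]) simp
  then show ?case by (simp add: zeta.simps(2)[abs_def])
qed


lemma mv_meas: fixes C :: "real^'p^'q" shows "f \<in> borel_measurable R \<Longrightarrow> (\<lambda>\<omega>. C *v f \<omega>) \<in> borel_measurable R"
  using measurable_compose[of f R borel "(*v) C" borel] 
  by (metis borel_measurable_continuous_onI linear_continuous_on matrix_vector_mul_bounded_linear continuous_on_def)

locale lq = prob_space M for M :: "'a measure" +
  fixes A :: "real^'n^'n" and B :: "real^'m^'n"
    and W M0 Q :: "real^'n^'n" and R :: "real^'m^'m" and m0 :: "real^'n"
    and N :: nat
    and x w xhat :: "nat \<Rightarrow> 'a \<Rightarrow> real^'n" and u :: "nat \<Rightarrow> 'a \<Rightarrow> real^'m"
    and \<tau> :: "nat \<Rightarrow> 'a \<Rightarrow> nat" and \<delta> :: "nat \<Rightarrow> 'a \<Rightarrow> bool" and \<nu> :: "nat \<Rightarrow> 'a \<Rightarrow> real"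
    and k :: nat
  assumes W_pd: "pd_mat W"
    and x0_gauss: "gaussian_vec M (x 0) m0 M0"
    and w_gauss: "\<forall>j. gaussian_vec M (w j) 0 W"
    and tau_meas: "\<forall>j. \<tau> j \<in> measurable M (count_space UNIV)"
    and nu_meas: "\<forall>j. \<nu> j \<in> borel_measurable M"
    and indep: "prob_space.indep_sets M (prim_sets M (x 0) w \<tau> \<nu>) UNIV"
    and dyn: "\<forall>j. \<forall>\<omega>\<in>space M. x (Suc j) \<omega> = A *v x j \<omega> + B *v u j \<omega> + w j \<omega>"
    and ctrl: "\<forall>j\<le>N. \<forall>\<omega>\<in>space M. u j \<omega> = - (gain_L A B Q R N j *v xhat j \<omega>)"
    and est0: "\<forall>\<omega>\<in>space M. xhat 0 \<omega> = m0"
    and est: "\<forall>j. \<forall>\<omega>\<in>space M. xhat (Suc j) \<omega> =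
                (if \<delta> j \<omega>
                 then matpow A (zeta \<tau> j \<omega> + 1) *v x (j - zeta \<tau> j \<omega>) \<omega>
                      + (\<Sum>t\<le>zeta \<tau> j \<omega>. matpow A t *v (B *v u (j - t) \<omega>))
                 else A *v xhat j \<omega> + B *v u j \<omega>)"
    and trig: "\<forall>j\<le>N. \<delta> j \<in> measurable
                  (sigma (space M) (info_sets M x u \<delta> \<tau> j \<union> rv_sets M borel (\<nu> j)))
                  (count_space UNIV)"
    and kN: "k \<le> N"
begin

definition good :: "'a measure \<Rightarrow> nat \<Rightarrow> nat \<Rightarrow> bool" where
 "good Rm b j \<longleftrightarrow>
  (\<forall>t\<le>j. zeta \<tau> t \<in> Rm \<rightarrow>\<^sub>M count_space UNIV \<and> (\<lambda>\<omega>. x (t - zeta \<tau> t \<omega>) \<omega>) \<in> borel_measurable Rm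
      \<and> eta \<delta> \<tau> t \<in> Rm \<rightarrow>\<^sub>M count_space UNIV
      \<and> (\<lambda>\<omega>. case eta \<delta> \<tau> t \<omega> of enat i \<Rightarrow> x (t - i) \<omega> | \<infinity> \<Rightarrow> 0) \<in> borel_measurable Rm)
  \<and> (\<forall>s<j. \<delta> s \<in> Rm \<rightarrow>\<^sub>M count_space UNIV \<and> u s \<in> borel_measurable Rm)
  \<and> (\<forall>s\<le>j. xhat s \<in> borel_measurable Rm)
  \<and> (\<forall>i\<le>j. i \<le> b \<longrightarrow> x i \<in> borel_measurable Rm)"

lemma info_trace:
  assumes "good Rm b j" "space Rm \<subseteq> space M" "G \<in> info_sets M x u \<delta> \<tau> j"
  shows "G \<inter> space Rm \<in> sets Rm"
  using assms unfolding info_sets_def good_def by (blast intro: rv_sets_trace)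

lemma delta_meas:
  assumes "good Rm b j" "space Rm \<subseteq> space M" "\<nu> j \<in> borel_measurable Rm" "j \<le> N"
  shows "\<delta> j \<in> Rm \<rightarrow>\<^sub>M count_space UNIV"
proof -
  have id: "(\<lambda>\<omega>. \<omega>) \<in> Rm \<rightarrow>\<^sub>M sigma (space M) (info_sets M x u \<delta> \<tau> j \<union> rv_sets M borel (\<nu> j))"
  proof (rule id_meas_sigma)
    show "info_sets M x u \<delta> \<tau> j \<union> rv_sets M borel (\<nu> j) \<subseteq> Pow (space M)"
      using info_sets_Pow rv_sets_Pow by blast
    fix G assume "G \<in> info_sets M x u \<delta> \<tau> j \<union> rv_sets M borel (\<nu> j)"
    then show "G \<inter> space Rm \<in> sets Rm"
      using info_trace[OF assms(1,2)] rv_sets_trace[OF assms(3,2)] by blast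
  qed (use assms in auto)
  show ?thesis using measurable_compose[OF id] trig assms(4) by auto
qed

lemma u_meas:
  assumes "xhat j \<in> borel_measurable Rm" "space Rm \<subseteq> space M" "j \<le> N"
  shows "u j \<in> borel_measurable Rm"
proof -
  have "(\<lambda>\<omega>. - (gain_L A B Q R N j *v xhat j \<omega>)) \<in> borel_measurable Rm"
    using mv_meas[OF assms(1)] by measurable
  then show ?thesis
    by (rule measurable_cong[THEN iffD1, rotated]) (use ctrl assms in auto)
qed

lemma xhat_Suc_meas:
  assumes "xhat j \<in> borel_measurable Rm" "space Rm \<subseteq> space M"
    and "\<delta> j \<in> Rm \<rightarrow>\<^sub>M count_space UNIV" "zeta \<tau> j \<in> Rm \<rightarrow>\<^sub>M count_space UNIV"
    and "(\<lambda>\<omega>. x (j - zeta \<tau> j \<omega>) \<omega>) \<in> borel_measurable Rm"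
    and "\<And>s. s \<le> j \<Longrightarrow> u s \<in> borel_measurable Rm"
  shows "xhat (Suc j) \<in> borel_measurable Rm"
proof -
  define X where "X = (\<lambda>\<omega>. x (j - zeta \<tau> j \<omega>) \<omega>)"
  have X: "X \<in> borel_measurable Rm" using assms(5) by (simp add: X_def)
  have T1: "(\<lambda>\<omega>. matpow A (zeta \<tau> j \<omega> + 1) *v X \<omega>) \<in> borel_measurable Rm"
    using measurable_compose_countable[where f="\<lambda>i \<omega>. matpow A (i + 1) *v X \<omega>", OF mv_meas[OF X] assms(4)] .
  have T2: "(\<lambda>\<omega>. \<Sum>t\<le>zeta \<tau> j \<omega>. matpow A t *v (B *v u (j - t) \<omega>)) \<in> borel_measurable Rm"
  proof (rule measurable_compose_countable[where f="\<lambda>i \<omega>. \<Sum>t\<le>i. matpow A t *v (B *v u (j - t) \<omega>)", OF _ assms(4)])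
    fix i show "(\<lambda>\<omega>. \<Sum>t\<le>i. matpow A t *v (B *v u (j - t) \<omega>)) \<in> borel_measurable Rm"
      by (intro borel_measurable_sum mv_meas assms(6)) auto
  qed
  have T3: "(\<lambda>\<omega>. A *v xhat j \<omega> + B *v u j \<omega>) \<in> borel_measurable Rm"
    using mv_meas[OF assms(1)] mv_meas[OF assms(6)[of j]] by measurable
  have "(\<lambda>\<omega>. (\<lambda>d. if d then matpow A (zeta \<tau> j \<omega> + 1) *v X \<omega> + (\<Sum>t\<le>zeta \<tau> j \<omega>. matpow A t *v (B *v u (j - t) \<omega>))
             else A *v xhat j \<omega> + B *v u j \<omega>) (\<delta> j \<omega>)) \<in> borel_measurable Rm"
  proof (rule measurable_compose_countable[OF _ assms(3)])
    fix d :: bool show "(\<lambda>\<omega>. if d then matpow A (zeta \<tau> j \<omega> + 1) *v X \<omega> + (\<Sum>t\<le>zeta \<tau> j \<omega>. matpow A t *v (B *v u (j - t) \<omega>))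
             else A *v xhat j \<omega> + B *v u j \<omega>) \<in> borel_measurable Rm"
      using T1 T2 T3 by (cases d) auto
  qed
  then show ?thesis
    by (rule measurable_cong[THEN iffD1, rotated]) (use est assms(2) in \<open>auto simp: X_def\<close>)
qed

end
context lq begin

lemma gen_meas:
  assumes sp: "space Rm \<subseteq> space M"
    and x0R: "x 0 \<in> borel_measurable Rm"
    and wR: "\<And>i. i < b \<Longrightarrow> w i \<in> borel_measurable Rm"
    and tauR: "\<And>i. \<tau> i \<in> Rm \<rightarrow>\<^sub>M count_space UNIV"
    and nuR: "\<And>i. \<nu> i \<in> borel_measurable Rm"
    and gap: "\<And>\<omega> t. \<omega> \<in> space Rm \<Longrightarrow> t \<le> J \<Longrightarrow> t - zeta \<tau> t \<omega> \<le> b"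
    and JN: "J \<le> Suc N"
  shows "j \<le> J \<Longrightarrow> good Rm b j"
proof (induction j)
  case 0
  have e0: "eta \<delta> \<tau> 0 = (\<lambda>\<omega>. \<infinity>)" by auto
  have "(\<lambda>\<omega>. m0) \<in> borel_measurable Rm" by simp
  then have xh0: "xhat 0 \<in> borel_measurable Rm"
    by (rule measurable_cong[THEN iffD1, rotated]) (use est0 sp in auto)
  show ?case unfolding good_def using x0R xh0 zeta_meas[OF tauR, where t=0] by (simp add: e0)
next
  case (Suc j)
  then have jJ: "j < J" and G: "good Rm b j" by auto
  have jN: "j \<le> N" using jJ JN by simp
  have dj: "\<delta> j \<in> Rm \<rightarrow>\<^sub>M count_space UNIV" using delta_meas[OF G sp nuR jN] .
  have xhj: "xhat j \<in> borel_measurable Rm" using G unfolding good_def by auto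
  have uj: "u j \<in> borel_measurable Rm" using u_meas[OF xhj sp jN] .
  have us: "\<And>s. s \<le> j \<Longrightarrow> u s \<in> borel_measurable Rm"
    using G uj unfolding good_def by (auto simp: le_less)
  have zj: "zeta \<tau> j \<in> Rm \<rightarrow>\<^sub>M count_space UNIV" and xzj: "(\<lambda>\<omega>. x (j - zeta \<tau> j \<omega>) \<omega>) \<in> borel_measurable Rm"
    and ej: "eta \<delta> \<tau> j \<in> Rm \<rightarrow>\<^sub>M count_space UNIV"
    using G unfolding good_def by auto
  have xhS: "xhat (Suc j) \<in> borel_measurable Rm"
    using xhat_Suc_meas[OF xhj sp dj zj xzj us] .
  have xi: "\<And>i. i \<le> Suc j \<Longrightarrow> i \<le> b \<Longrightarrow> x i \<in> borel_measurable Rm"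
  proof -
    fix i assume i: "i \<le> Suc j" "i \<le> b"
    show "x i \<in> borel_measurable Rm"
    proof (cases "i = Suc j")
      case False then show ?thesis using G i unfolding good_def by auto
    next
      case True
      have xj: "x j \<in> borel_measurable Rm" using G i True unfolding good_def by auto
      have wj: "w j \<in> borel_measurable Rm" using wR i True by auto
      have "(\<lambda>\<omega>. A *v x j \<omega> + B *v u j \<omega> + w j \<omega>) \<in> borel_measurable Rm"
        using mv_meas[OF xj] mv_meas[OF uj] wj by measurable
      then show ?thesis unfolding True
        by (rule measurable_cong[THEN iffD1, rotated]) (use dyn sp in auto)
    qed
  qed
  have zS: "zeta \<tau> (Suc j) \<in> Rm \<rightarrow>\<^sub>M count_space UNIV" using zeta_meas[OF tauR] .
  have xzS: "(\<lambda>\<omega>. x (Suc j - zeta \<tau> (Suc j) \<omega>) \<omega>) \<in> borel_measurable Rm"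
  proof -
    have "(\<lambda>\<omega>. (\<lambda>i \<omega>. if Suc j - i \<le> b then x (Suc j - i) \<omega> else 0) (zeta \<tau> (Suc j) \<omega>) \<omega>) \<in> borel_measurable Rm"
    proof (rule measurable_compose_countable[OF _ zS])
      fix i show "(\<lambda>\<omega>. if Suc j - i \<le> b then x (Suc j - i) \<omega> else 0) \<in> borel_measurable Rm"
        using xi[of "Suc j - i"] by (cases "Suc j - i \<le> b") auto
    qed
    then show ?thesis
    proof (rule measurable_cong[THEN iffD1, rotated])
      fix \<omega> assume "\<omega> \<in> space Rm"
      then have "Suc j - zeta \<tau> (Suc j) \<omega> \<le> b" using gap jJ by (meson Suc_leI)
      then show "(if Suc j - zeta \<tau> (Suc j) \<omega> \<le> b then x (Suc j - zeta \<tau> (Suc j) \<omega>) \<omega> else 0) = x (Suc j - zeta \<tau> (Suc j) \<omega>) \<omega>"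
        by (simp del: zeta.simps)
    qed
  qed
  have eS: "eta \<delta> \<tau> (Suc j) \<in> Rm \<rightarrow>\<^sub>M count_space UNIV"
  proof -
    have "(\<lambda>\<omega>. (\<lambda>d \<omega>. if d then enat (zeta \<tau> j \<omega> + 1) else eta \<delta> \<tau> j \<omega> + 1) (\<delta> j \<omega>) \<omega>) \<in> Rm \<rightarrow>\<^sub>M count_space UNIV"
    proof (rule measurable_compose_countable[OF _ dj])
      fix d :: bool
      show "(\<lambda>\<omega>. if d then enat (zeta \<tau> j \<omega> + 1) else eta \<delta> \<tau> j \<omega> + 1) \<in> Rm \<rightarrow>\<^sub>M count_space UNIV"
        using cnt1[OF zj, of _ "\<lambda>a. enat (a + 1)"] cnt1[OF ej, of _ "\<lambda>a. a + 1"] by (cases d) auto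
    qed
    then show ?thesis by (simp add: eta.simps(2)[abs_def])
  qed
  have xeS: "(\<lambda>\<omega>. case eta \<delta> \<tau> (Suc j) \<omega> of enat i \<Rightarrow> x (Suc j - i) \<omega> | \<infinity> \<Rightarrow> 0) \<in> borel_measurable Rm"
  proof -
    have "(\<lambda>\<omega>. (\<lambda>e \<omega>. case e of enat i \<Rightarrow> (if Suc j - i \<le> b then x (Suc j - i) \<omega> else 0) | \<infinity> \<Rightarrow> 0) (eta \<delta> \<tau> (Suc j) \<omega>) \<omega>) \<in> borel_measurable Rm"
    proof (rule measurable_compose_countable[OF _ eS])
      fix e :: enat
      show "(\<lambda>\<omega>. case e of enat i \<Rightarrow> (if Suc j - i \<le> b then x (Suc j - i) \<omega> else 0) | \<infinity> \<Rightarrow> 0) \<in> borel_measurable Rm"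
      proof (cases e)
        case (enat i) then show ?thesis using xi[of "Suc j - i"] by (cases "Suc j - i \<le> b") auto
      qed simp
    qed
    moreover have "\<And>\<omega>. \<omega> \<in> space Rm \<Longrightarrow> (case eta \<delta> \<tau> (Suc j) \<omega> of enat i \<Rightarrow> (if Suc j - i \<le> b then x (Suc j - i) \<omega> else 0) | \<infinity> \<Rightarrow> 0)
          = (case eta \<delta> \<tau> (Suc j) \<omega> of enat i \<Rightarrow> x (Suc j - i) \<omega> | \<infinity> \<Rightarrow> 0)"
    proof -
      fix \<omega> assume \<omega>: "\<omega> \<in> space Rm"
      show "?thesis \<omega>"
      proof (cases "eta \<delta> \<tau> (Suc j) \<omega>")
        case (enat i)
        have "enat (zeta \<tau> (Suc j) \<omega>) \<le> enat i" using eta_ge[of \<tau> "Suc j" \<omega> \<delta>] enat by simp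
        then have "Suc j - i \<le> Suc j - zeta \<tau> (Suc j) \<omega>" by simp
        also have "\<dots> \<le> b" using gap[OF \<omega>, of "Suc j"] jJ by simp
        finally show ?thesis using enat by simp
      qed simp
    qed
    ultimately show ?thesis
      by (rule measurable_cong[THEN iffD1, rotated]) 
  qed
  show ?case unfolding good_def
  proof (intro conjI allI impI)
    fix t assume "t \<le> Suc j"
    then have "t \<le> j \<or> t = Suc j" by auto
    then show "zeta \<tau> t \<in> Rm \<rightarrow>\<^sub>M count_space UNIV" "(\<lambda>\<omega>. x (t - zeta \<tau> t \<omega>) \<omega>) \<in> borel_measurable Rm"
      "eta \<delta> \<tau> t \<in> Rm \<rightarrow>\<^sub>M count_space UNIV"
      "(\<lambda>\<omega>. case eta \<delta> \<tau> t \<omega> of enat i \<Rightarrow> x (t - i) \<omega> | \<infinity> \<Rightarrow> 0) \<in> borel_measurable Rm"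
      using G zS xzS eS xeS unfolding good_def by auto
  next
    fix s assume "s < Suc j"
    then have "s < j \<or> s = j" by auto
    then show "\<delta> s \<in> Rm \<rightarrow>\<^sub>M count_space UNIV" "u s \<in> borel_measurable Rm"
      using G dj uj unfolding good_def by auto
  next
    fix s assume "s \<le> Suc j"
    then have "s \<le> j \<or> s = Suc j" by auto
    then show "xhat s \<in> borel_measurable Rm" using G xhS unfolding good_def by auto
  next
    fix i assume "i \<le> Suc j" "i \<le> b" then show "x i \<in> borel_measurable Rm" by (rule xi)
  qed
qed

end
context lq begin

definition "Fm = sigma (space M) (info_sets M x u \<delta> \<tau> k \<union> rv_sets M (count_space UNIV) (\<delta> k))"
definition "Ik = info_alg M x u \<delta> \<tau> k"
definition "Kc c = {i. \<forall>a. i = PW a \<longrightarrow> a < k - c}"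
definition "Ec c = (\<Union>i\<in>Kc c. prim_sets M (x 0) w \<tau> \<nu> i)"
definition "Hc c = sigma (space M) (Ec c)"
definition "Zc c = {\<omega> \<in> space M. zeta \<tau> k \<omega> = c}"

lemma x0M: "x 0 \<in> borel_measurable M" using x0_gauss unfolding gaussian_vec_def by auto
lemma wM: "w i \<in> borel_measurable M" using w_gauss unfolding gaussian_vec_def by auto
lemma tauM: "\<tau> i \<in> M \<rightarrow>\<^sub>M count_space UNIV" using tau_meas by auto
lemma nuM: "\<nu> i \<in> borel_measurable M" using nu_meas by auto

lemma goodM: "good M (Suc k) (Suc k)"
  by (rule gen_meas[where J="Suc k"]) (use x0M wM tauM nuM kN in \<open>auto intro: le_trans[OF diff_le_self]\<close>)

lemma rv_sets_sets: "Y \<in> M \<rightarrow>\<^sub>M Nm \<Longrightarrow> rv_sets M Nm Y \<subseteq> sets M"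
  unfolding rv_sets_def by (auto intro: measurable_sets)

lemma info_sets_sets: "j \<le> Suc k \<Longrightarrow> info_sets M x u \<delta> \<tau> j \<subseteq> sets M"
proof
  fix G assume j: "j \<le> Suc k" and G: "G \<in> info_sets M x u \<delta> \<tau> j"
  have "good M (Suc k) j" using goodM j unfolding good_def by auto
  then have "G \<inter> space M \<in> sets M" using info_trace G by blast
  moreover have "G \<subseteq> space M" using G info_sets_Pow by blast
  ultimately show "G \<in> sets M" by (simp add: Int_absorb2)
qed

lemma deltakM: "\<delta> k \<in> M \<rightarrow>\<^sub>M count_space UNIV"
  using goodM unfolding good_def by auto

lemma Fm_gens: "info_sets M x u \<delta> \<tau> k \<union> rv_sets M (count_space UNIV) (\<delta> k) \<subseteq> sets M"
  using info_sets_sets[of k] rv_sets_sets[OF deltakM] by auto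

lemma space_Fm: "space Fm = space M"
  unfolding Fm_def using info_sets_Pow rv_sets_Pow by (intro space_measure_of) blast
lemma sets_Fm: "sets Fm = sigma_sets (space M) (info_sets M x u \<delta> \<tau> k \<union> rv_sets M (count_space UNIV) (\<delta> k))"
  unfolding Fm_def using info_sets_Pow rv_sets_Pow by (intro sets_measure_of) blast
lemma space_Ik: "space Ik = space M"
  unfolding Ik_def info_alg_def using info_sets_Pow by (intro space_measure_of) blast
lemma sets_Ik: "sets Ik = sigma_sets (space M) (info_sets M x u \<delta> \<tau> k)"
  unfolding Ik_def info_alg_def using info_sets_Pow by (intro sets_measure_of) blast

lemma subalg_Fm: "subalgebra M Fm"
  unfolding subalgebra_def space_Fm sets_Fm
  using sets.sigma_sets_subset[OF Fm_gens] by simp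
lemma subalg_Ik: "subalgebra M Ik"
  unfolding subalgebra_def space_Ik sets_Ik
  using sets.sigma_sets_subset[OF info_sets_sets[of k]] by simp
lemma subalg_Fm_Ik: "subalgebra Fm Ik"
  unfolding subalgebra_def space_Ik sets_Ik space_Fm sets_Fm
  by (simp add: sigma_sets_mono')

lemma Ec_Pow: "Ec c \<subseteq> Pow (space M)"
  unfolding Ec_def prim_sets_def rv_sets_def by (auto split: prim_idx.splits)
lemma space_Hc: "space (Hc c) = space M"
  unfolding Hc_def using Ec_Pow by (intro space_measure_of) blast
lemma sets_Hc: "sets (Hc c) = sigma_sets (space M) (Ec c)"
  unfolding Hc_def using Ec_Pow by (intro sets_measure_of) blast

lemma Hc_prim: "i \<in> Kc c \<Longrightarrow> prim_sets M (x 0) w \<tau> \<nu> i \<subseteq> Ec c"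
  unfolding Ec_def by auto

lemma x0_Hc: "x 0 \<in> Hc c \<rightarrow>\<^sub>M borel"
  unfolding Hc_def by (rule rv_gen_meas[OF Ec_Pow]) (use Hc_prim[of PX0 c] in \<open>auto simp: Kc_def prim_sets_def\<close>)
lemma w_Hc: "i < k - c \<Longrightarrow> w i \<in> Hc c \<rightarrow>\<^sub>M borel"
  unfolding Hc_def by (rule rv_gen_meas[OF Ec_Pow]) (use Hc_prim[of "PW i" c] in \<open>auto simp: Kc_def prim_sets_def\<close>)
lemma tau_Hc: "\<tau> i \<in> Hc c \<rightarrow>\<^sub>M count_space UNIV"
  unfolding Hc_def by (rule rv_gen_meas[OF Ec_Pow]) (use Hc_prim[of "PTau i" c] in \<open>auto simp: Kc_def prim_sets_def\<close>)
lemma nu_Hc: "\<nu> i \<in> Hc c \<rightarrow>\<^sub>M borel"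
  unfolding Hc_def by (rule rv_gen_meas[OF Ec_Pow]) (use Hc_prim[of "PNu i" c] in \<open>auto simp: Kc_def prim_sets_def\<close>)

lemma Zc_Hc: "Zc c \<in> sets (Hc c)"
proof -
  have "zeta \<tau> k \<in> Hc c \<rightarrow>\<^sub>M count_space UNIV" using zeta_meas[OF tau_Hc] .
  from measurable_sets[OF this, of "{c}"] show ?thesis
    by (simp add: Zc_def space_Hc vimage_def Int_def conj_commute)
qed

lemma good_Rc: "good (restrict_space (Hc c) (Zc c)) (k - c) k"
proof (rule gen_meas[where J=k])
  show "space (restrict_space (Hc c) (Zc c)) \<subseteq> space M"
    by (simp add: space_restrict_space space_Hc Zc_def)
  show "x 0 \<in> borel_measurable (restrict_space (Hc c) (Zc c))"
    by (rule measurable_restrict_space1[OF x0_Hc])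
  show "\<And>i. i < k - c \<Longrightarrow> w i \<in> borel_measurable (restrict_space (Hc c) (Zc c))"
    by (rule measurable_restrict_space1[OF w_Hc])
  show "\<And>i. \<tau> i \<in> restrict_space (Hc c) (Zc c) \<rightarrow>\<^sub>M count_space UNIV"
    by (rule measurable_restrict_space1[OF tau_Hc])
  show "\<And>i. \<nu> i \<in> borel_measurable (restrict_space (Hc c) (Zc c))"
    by (rule measurable_restrict_space1[OF nu_Hc])
  fix \<omega> t assume "\<omega> \<in> space (restrict_space (Hc c) (Zc c))" "t \<le> k"
  then show "t - zeta \<tau> t \<omega> \<le> k - c"
    using zeta_gap[of t k \<tau> \<omega>] by (auto simp: space_restrict_space space_Hc Zc_def)
qed (use kN in auto)

lemma key_trace:
  assumes G: "G \<in> sets Fm"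
  shows "G \<inter> Zc c \<in> sigma_sets (space M) (Ec c)"
proof -
  let ?R = "restrict_space (Hc c) (Zc c)"
  have sp: "space ?R = Zc c" by (auto simp: space_restrict_space space_Hc Zc_def)
  have spM: "space ?R \<subseteq> space M" unfolding sp by (auto simp: Zc_def)
  have dk: "\<delta> k \<in> ?R \<rightarrow>\<^sub>M count_space UNIV"
    by (rule delta_meas[OF good_Rc spM measurable_restrict_space1[OF nu_Hc] kN])
  have id: "(\<lambda>\<omega>. \<omega>) \<in> ?R \<rightarrow>\<^sub>M Fm"
    unfolding Fm_def
  proof (rule id_meas_sigma)
    show "info_sets M x u \<delta> \<tau> k \<union> rv_sets M (count_space UNIV) (\<delta> k) \<subseteq> Pow (space M)"
      using info_sets_Pow rv_sets_Pow by blast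
    fix G assume "G \<in> info_sets M x u \<delta> \<tau> k \<union> rv_sets M (count_space UNIV) (\<delta> k)"
    then show "G \<inter> space ?R \<in> sets ?R"
      using info_trace[OF good_Rc spM] rv_sets_trace[OF dk spM] by blast
  qed (use spM in auto)
  have "(\<lambda>\<omega>. \<omega>) -` G \<inter> space ?R \<in> sets ?R" using measurable_sets[OF id G] .
  then have "G \<inter> Zc c \<in> sets ?R" by (simp add: sp)
  moreover have "Zc c \<inter> space (Hc c) = Zc c" by (auto simp: space_Hc Zc_def)
  ultimately have "G \<inter> Zc c \<in> sets (Hc c)"
    using sets_restrict_space_iff[of "Zc c" "Hc c"] Zc_Hc by simp
  then show ?thesis by (simp add: sets_Hc)
qed

end

lemma vec_int: fixes f :: "'a \<Rightarrow> real^'n" 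
  assumes "\<And>i. integrable M (\<lambda>\<omega>. f \<omega> $ i)" shows "integrable M f"
proof -
  have int: "integrable M (\<lambda>\<omega>. \<Sum>i\<in>UNIV. (f \<omega> $ i) *\<^sub>R axis i 1)"
    by (rule Bochner_Integration.integrable_sum) (rule integrable_scaleR_left, rule assms)
  have eq: "f = (\<lambda>\<omega>. \<Sum>i\<in>UNIV. (f \<omega> $ i) *\<^sub>R axis i (1::real))"
    by (auto simp: vec_eq_iff axis_def if_distrib cong: if_cong)
  show ?thesis by (subst eq) (rule int)
qed

lemma normal_sq:
  fixes \<mu> \<sigma> :: real assumes s: "0 < \<sigma>"
  shows "integrable lborel (\<lambda>x. normal_density \<mu> \<sigma> x * x\<^sup>2)"
    "(\<integral>x. normal_density \<mu> \<sigma> x * x\<^sup>2 \<partial>lborel) = \<sigma>\<^sup>2 + \<mu>\<^sup>2"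
proof -
  have i1: "integrable lborel (\<lambda>x. normal_density \<mu> \<sigma> x * (x - \<mu>)^2)"
    using integrable_normal_moment[OF s] .
  have i2: "integrable lborel (\<lambda>x. normal_density \<mu> \<sigma> x * x)"
    using integrable_normal_moment_nz_1[OF s] .
  have i3: "integrable lborel (\<lambda>x. normal_density \<mu> \<sigma> x)" using integrable_normal_density s by blast
  have eqf: "(\<lambda>x. normal_density \<mu> \<sigma> x * x\<^sup>2) =
     (\<lambda>x. normal_density \<mu> \<sigma> x * (x - \<mu>)^2 + 2 * \<mu> * (normal_density \<mu> \<sigma> x * x) - \<mu>\<^sup>2 * normal_density \<mu> \<sigma> x)"
    by (auto simp: power2_eq_square algebra_simps)
  show "integrable lborel (\<lambda>x. normal_density \<mu> \<sigma> x * x\<^sup>2)"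
    by (subst eqf) (intro Bochner_Integration.integrable_diff Bochner_Integration.integrable_add integrable_mult_right i1 i2 i3)
  have v1: "(\<integral>x. normal_density \<mu> \<sigma> x * (x - \<mu>)^2 \<partial>lborel) = \<sigma>\<^sup>2"
  proof -
    have "(\<integral>x. normal_density \<mu> \<sigma> x * (x - \<mu>)^(2*1) \<partial>lborel) = fact (2*1) / ((2 / \<sigma>\<^sup>2)^1 * fact 1)"
      by (rule integral_normal_moment_even[OF s])
    also have "\<dots> = \<sigma>\<^sup>2" using s by (simp add: fact_numeral)
    finally show ?thesis by simp
  qed
  have v2: "(\<integral>x. normal_density \<mu> \<sigma> x * x \<partial>lborel) = \<mu>"
    using integral_normal_moment_nz_1[OF s] .
  have v3: "(\<integral>x. normal_density \<mu> \<sigma> x \<partial>lborel) = 1" using integral_normal_density s by blast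
  show "(\<integral>x. normal_density \<mu> \<sigma> x * x\<^sup>2 \<partial>lborel) = \<sigma>\<^sup>2 + \<mu>\<^sup>2"
    apply (subst eqf)
    apply (subst Bochner_Integration.integral_diff)
    apply (intro Bochner_Integration.integrable_add integrable_mult_right i1 i2 i3)
    apply (intro integrable_mult_right i3)
    apply (subst Bochner_Integration.integral_add)
    apply (intro integrable_mult_right i1 i2 i3)
    apply (intro integrable_mult_right i1 i2 i3)
    apply (simp add: v1 v2 v3)
    apply (simp add: power2_eq_square)
    done
qed

context lq begin

lemma gauss_lin:
  assumes g: "gaussian_vec M X m S"
  shows "integrable M (\<lambda>\<omega>. v \<bullet> X \<omega>) \<and> integrable M (\<lambda>\<omega>. (v \<bullet> X \<omega>)\<^sup>2)
     \<and> expectation (\<lambda>\<omega>. v \<bullet> X \<omega>) = v \<bullet> m \<and> expectation (\<lambda>\<omega>. (v \<bullet> X \<omega>)\<^sup>2) = (v \<bullet> m)\<^sup>2 + v \<bullet> (S *v v)"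
proof -
  define \<mu> where "\<mu> = v \<bullet> m"
  define s2 where "s2 = v \<bullet> (S *v v)"
  have Xm[measurable]: "X \<in> borel_measurable M" using g unfolding gaussian_vec_def by auto
  have s2pos: "0 \<le> s2" using g unfolding gaussian_vec_def psd_mat_def s2_def by auto
  have Ym[measurable]: "(\<lambda>\<omega>. v \<bullet> X \<omega>) \<in> borel_measurable M" by measurable
  have D: "if s2 = 0 then distr M borel (\<lambda>\<omega>. v \<bullet> X \<omega>) = return borel \<mu>
         else distributed M lborel (\<lambda>\<omega>. v \<bullet> X \<omega>) (normal_density \<mu> (sqrt s2))"
    using g unfolding gaussian_vec_def \<mu>_def s2_def Let_def by auto
  show ?thesis
  proof (cases "s2 = 0")
    case True
    then have D0: "distr M borel (\<lambda>\<omega>. v \<bullet> X \<omega>) = return borel \<mu>" using D by simp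
    have int: "integrable M (\<lambda>\<omega>. f (v \<bullet> X \<omega>))" if f[measurable]: "f \<in> borel_measurable borel" for f :: "real \<Rightarrow> real"
    proof -
      have "integrable (return borel \<mu>) f" by (simp add: integrable_iff_bounded nn_integral_return)
      then have "integrable (distr M borel (\<lambda>\<omega>. v \<bullet> X \<omega>)) f" by (simp add: D0)
      then show ?thesis by (subst (asm) integrable_distr_eq) auto
    qed
    have itg: "(\<integral>\<omega>. f (v \<bullet> X \<omega>) \<partial>M) = f \<mu>" if f[measurable]: "f \<in> borel_measurable borel" for f :: "real \<Rightarrow> real"
    proof -
      have "(\<integral>\<omega>. f (v \<bullet> X \<omega>) \<partial>M) = integral\<^sup>L (distr M borel (\<lambda>\<omega>. v \<bullet> X \<omega>)) f"
        by (subst integral_distr) auto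
      also have "\<dots> = f \<mu>" by (simp add: D0 integral_return)
      finally show ?thesis .
    qed
    show ?thesis using int[of "\<lambda>y. y"] int[of "\<lambda>y. y\<^sup>2"] itg[of "\<lambda>y. y"] itg[of "\<lambda>y. y\<^sup>2"] True
      by (simp add: \<mu>_def s2_def)
  next
    case False
    then have sp: "0 < sqrt s2" using s2pos by simp
    have D1: "distributed M lborel (\<lambda>\<omega>. v \<bullet> X \<omega>) (normal_density \<mu> (sqrt s2))" using D False by simp
    have i1: "integrable M (\<lambda>\<omega>. v \<bullet> X \<omega>)"
      using distributed_integrable[OF D1, of "\<lambda>y. y"] integrable_normal_moment_nz_1[OF sp] by simp
    have i2: "integrable M (\<lambda>\<omega>. (v \<bullet> X \<omega>)\<^sup>2)"
      using distributed_integrable[OF D1, of "\<lambda>y. y\<^sup>2"] normal_sq(1)[OF sp] by simp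
    have e1: "expectation (\<lambda>\<omega>. v \<bullet> X \<omega>) = \<mu>" using normal_distributed_expectation[OF sp D1] .
    have e2: "expectation (\<lambda>\<omega>. (v \<bullet> X \<omega>)\<^sup>2) = s2 + \<mu>\<^sup>2"
      using distributed_integral[OF D1, of "\<lambda>y. y\<^sup>2", symmetric] normal_sq(2)[OF sp, of \<mu>] s2pos by simp
    show ?thesis using i1 i2 e1 e2 by (simp add: \<mu>_def s2_def)
  qed
qed

end

lemma ax_inner: "axis l (1::real) \<bullet> ((W::real^'n^'n) *v axis l' 1) = W $ l $ l'"
  by (simp add: inner_axis' matrix_vector_mult_basis column_def)

lemma sigma_vimage_sub:
  assumes "X \<in> sigma (space M) G \<rightarrow>\<^sub>M Nm" "G \<subseteq> Pow (space M)"
  shows "{X -` A \<inter> space M | A. A \<in> sets Nm} \<subseteq> sigma_sets (space M) G"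
proof
  fix E assume "E \<in> {X -` A \<inter> space M | A. A \<in> sets Nm}"
  then obtain A where A: "A \<in> sets Nm" "E = X -` A \<inter> space M" by auto
  from measurable_sets[OF assms(1) A(1)] show "E \<in> sigma_sets (space M) G"
    using assms(2) A(2) by simp
qed

lemma comp_meas: "f \<in> borel_measurable Mx \<Longrightarrow> (\<lambda>\<omega>. (f \<omega> :: real^'n) $ i) \<in> borel_measurable Mx"
proof -
  have "(\<lambda>x::real^'n. x $ i) \<in> borel_measurable borel" by measurable
  then show "f \<in> borel_measurable Mx \<Longrightarrow> ?thesis" using measurable_compose by blast
qed

lemma norm_prod_le: fixes p q :: real shows "norm (p * q) \<le> norm (p\<^sup>2 + q\<^sup>2)"
proof -
  have h: "0 \<le> (\<bar>p\<bar> - \<bar>q\<bar>)\<^sup>2" by (rule zero_le_power2)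
  have e: "(\<bar>p\<bar> - \<bar>q\<bar>)\<^sup>2 = p\<^sup>2 + q\<^sup>2 - 2 * (\<bar>p\<bar> * \<bar>q\<bar>)"
    by (simp add: power2_diff)
  have a: "\<bar>p * q\<bar> = \<bar>p\<bar> * \<bar>q\<bar>" by (rule abs_mult)
  have b: "0 \<le> \<bar>p\<bar> * \<bar>q\<bar>" by simp
  have c: "0 \<le> p\<^sup>2 + q\<^sup>2" by simp
  have "\<bar>p * q\<bar> \<le> p\<^sup>2 + q\<^sup>2" using a b h e by linarith
  then show ?thesis using c by simp
qed

context lq begin

lemma W_sym: "W $ l' $ l = W $ l $ l'"
proof -
  have "transpose W = W" using W_pd unfolding pd_mat_def by auto
  then have "transpose W $ l $ l' = W $ l $ l'" by simp
  then show ?thesis by (simp add: transpose_def)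
qed

lemma w_comp: "integrable M (\<lambda>\<omega>. w a \<omega> $ l)" "expectation (\<lambda>\<omega>. w a \<omega> $ l) = 0"
    "integrable M (\<lambda>\<omega>. (w a \<omega> $ l)\<^sup>2)"
  using gauss_lin[OF w_gauss[rule_format, of a], of "axis l 1"] by (simp_all add: inner_axis')

lemma x0_comp: "integrable M (\<lambda>\<omega>. x 0 \<omega> $ l)"
  using gauss_lin[OF x0_gauss, of "axis l 1"] by (simp_all add: inner_axis')

lemma w_prod: "integrable M (\<lambda>\<omega>. w a \<omega> $ l * w a \<omega> $ l')"
   "expectation (\<lambda>\<omega>. w a \<omega> $ l * w a \<omega> $ l') = W $ l $ l'"
proof -
  define p :: "real^'n" where "p = axis l 1 + axis l' 1"
  define q :: "real^'n" where "q = axis l 1 - axis l' 1"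
  note gp = gauss_lin[OF w_gauss[rule_format, of a], of p]
  note gq = gauss_lin[OF w_gauss[rule_format, of a], of q]
  have eq: "\<And>\<omega>. w a \<omega> $ l * w a \<omega> $ l' = (p \<bullet> w a \<omega>)\<^sup>2 / 4 - (q \<bullet> w a \<omega>)\<^sup>2 / 4"
    by (simp add: p_def q_def inner_add_left inner_diff_left inner_axis') (simp add: power2_eq_square field_simps)
  show "integrable M (\<lambda>\<omega>. w a \<omega> $ l * w a \<omega> $ l')"
    unfolding eq using gp gq by auto
  have "expectation (\<lambda>\<omega>. w a \<omega> $ l * w a \<omega> $ l') = p \<bullet> (W *v p) / 4 - q \<bullet> (W *v q) / 4"
    unfolding eq using gp gq by (simp add: Bochner_Integration.integral_diff)
  also have "\<dots> = W $ l $ l'"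
    using W_sym[of l l']
    by (simp add: p_def q_def inner_add_left inner_diff_left inner_add_right inner_diff_right
        matrix_vector_right_distrib matrix_vector_mult_diff_distrib ax_inner algebra_simps) (simp add: field_simps)
  finally show "expectation (\<lambda>\<omega>. w a \<omega> $ l * w a \<omega> $ l') = W $ l $ l'" .
qed

lemma w_prod_int: "integrable M (\<lambda>\<omega>. w a \<omega> $ l * w b \<omega> $ l')"
proof (rule Bochner_Integration.integrable_bound)
  show "integrable M (\<lambda>\<omega>. (w a \<omega> $ l)\<^sup>2 + (w b \<omega> $ l')\<^sup>2)"
    by (rule Bochner_Integration.integrable_add) (rule w_comp(3))+
  have [measurable]: "(\<lambda>\<omega>. w a \<omega> $ l) \<in> borel_measurable M" "(\<lambda>\<omega>. w b \<omega> $ l') \<in> borel_measurable M" 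
    by (rule comp_meas[OF wM])+
  show "(\<lambda>\<omega>. w a \<omega> $ l * w b \<omega> $ l') \<in> borel_measurable M" by measurable
  show "AE \<omega> in M. norm (w a \<omega> $ l * w b \<omega> $ l') \<le> norm ((w a \<omega> $ l)\<^sup>2 + (w b \<omega> $ l')\<^sup>2)"
    by (intro AE_I2) (rule norm_prod_le)
qed

end
context lq begin

abbreviation "Ep \<equiv> prim_sets M (x 0) w \<tau> \<nu>"

lemma prim_events: "Ep i \<subseteq> events"
  by (cases i) (auto simp: prim_sets_def intro: rv_sets_sets[THEN subsetD] x0M wM tauM nuM)

lemma Ec_events: "Ec c \<subseteq> events"
  unfolding Ec_def using prim_events by blast

lemma prim_Int_stable: "Int_stable (Ep i)"
  by (cases i) (auto simp: prim_sets_def rv_sets_Int_stable)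

lemma prim_Pow: "Ep i \<subseteq> Pow (space M)"
  by (cases i) (auto simp: prim_sets_def rv_sets_Pow)

lemma S_events: "S \<in> sigma_sets (space M) (Ec c) \<Longrightarrow> S \<in> events"
  using sets.sigma_sets_subset[OF Ec_events] by blast

lemma w_sig_meas: "w a \<in> sigma (space M) (Ep (PW a)) \<rightarrow>\<^sub>M borel"
  by (rule rv_gen_meas) (auto simp: prim_sets_def rv_sets_Pow)

lemma indep2:
  assumes S: "S \<in> sigma_sets (space M) (Ec c)" and a: "k - c \<le> a"
    and f[measurable]: "f \<in> borel_measurable borel" and fi: "integrable M (\<lambda>\<omega>. f (w a \<omega>))"
  shows "(\<integral>\<omega>. indicator S \<omega> * f (w a \<omega>) \<partial>M) = prob S * expectation (\<lambda>\<omega>. f (w a \<omega>))"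
proof -
  define I where "I = (\<lambda>j::nat. if j = 0 then Kc c else {PW a})"
  define J where "J = {0::nat, 1}"
  have ind0: "indep_sets Ep (\<Union>j\<in>J. I j)"
    by (rule indep_sets_mono_index[OF subset_UNIV indep])
  have disj: "disjoint_family_on I J"
    using a unfolding disjoint_family_on_def I_def J_def Kc_def by auto
  have IS: "indep_sets (\<lambda>j. sigma_sets (space M) (\<Union>i\<in>I j. Ep i)) J"
    by (rule indep_sets_collect_sigma[OF ind0 prim_Int_stable disj])
  define X where "X = (\<lambda>j::nat. if j = 0 then indicator S else (\<lambda>\<omega>. f (w a \<omega>)))"
  have Sev: "S \<in> events" using S_events[OF S] .
  have Si: "integrable M (indicator S :: 'a \<Rightarrow> real)"
    using Sev by (simp add: integrable_indicator_iff less_top[symmetric] Int_absorb2 sets.sets_into_space)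
  have wa[measurable]: "w a \<in> borel_measurable M" by (rule wM)
  have Xs: "X j \<in> sigma (space M) (\<Union>i\<in>I j. Ep i) \<rightarrow>\<^sub>M borel" if "j \<in> J" for j
  proof (cases "j = 0")
    case True
    have "S \<in> sets (sigma (space M) (Ec c))"
      using S Ec_Pow by (simp add: sets_measure_of)
    then show ?thesis using True by (simp add: X_def I_def Ec_def[symmetric] borel_measurable_indicator)
  next
    case False
    have "(\<lambda>\<omega>. f (w a \<omega>)) \<in> sigma (space M) (Ep (PW a)) \<rightarrow>\<^sub>M borel"
      using measurable_compose[OF w_sig_meas f] .
    then show ?thesis using False by (simp add: X_def I_def)
  qed
  have iv: "indep_vars (\<lambda>_. borel) X J"
    unfolding indep_vars_def2
  proof
    show "\<forall>j\<in>J. random_variable borel (X j)" using Sev by (auto simp: X_def J_def)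
    show "indep_sets (\<lambda>j. {X j -` A \<inter> space M |A. A \<in> sets borel}) J"
    proof (rule indep_sets_mono_sets[OF IS])
      fix j assume "j \<in> J"
      show "{X j -` A \<inter> space M |A. A \<in> sets borel} \<subseteq> sigma_sets (space M) (\<Union>i\<in>I j. Ep i)"
        by (rule sigma_vimage_sub[OF Xs[OF \<open>j \<in> J\<close>]]) (use prim_Pow in blast)
    qed
  qed
  have intX: "integrable M (X j)" if "j \<in> J" for j
    using fi Si by (auto simp: X_def J_def)
  have "(\<integral>\<omega>. (\<Prod>j\<in>J. X j \<omega>) \<partial>M) = (\<Prod>j\<in>J. \<integral>\<omega>. X j \<omega> \<partial>M)"
    by (rule indep_vars_lebesgue_integral[OF _ iv intX]) (auto simp: J_def)
  then show ?thesis using Sev by (simp add: J_def X_def)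
qed

lemma indep3:
  assumes S: "S \<in> sigma_sets (space M) (Ec c)" and a: "k - c \<le> a" and b: "k - c \<le> b" and ab: "a \<noteq> b"
    and f[measurable]: "f \<in> borel_measurable borel" and fi: "integrable M (\<lambda>\<omega>. f (w a \<omega>))"
    and g[measurable]: "g \<in> borel_measurable borel" and gi: "integrable M (\<lambda>\<omega>. g (w b \<omega>))"
  shows "(\<integral>\<omega>. indicator S \<omega> * (f (w a \<omega>) * g (w b \<omega>)) \<partial>M)
     = prob S * expectation (\<lambda>\<omega>. f (w a \<omega>)) * expectation (\<lambda>\<omega>. g (w b \<omega>))"
proof -
  define I where "I = (\<lambda>j::nat. if j = 0 then Kc c else if j = 1 then {PW a} else {PW b})"
  define J where "J = {0::nat, 1, 2}"
  have ind0: "indep_sets Ep (\<Union>j\<in>J. I j)"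
    by (rule indep_sets_mono_index[OF subset_UNIV indep])
  have disj: "disjoint_family_on I J"
    using a b ab unfolding disjoint_family_on_def I_def J_def Kc_def by auto
  have IS: "indep_sets (\<lambda>j. sigma_sets (space M) (\<Union>i\<in>I j. Ep i)) J"
    by (rule indep_sets_collect_sigma[OF ind0 prim_Int_stable disj])
  define X where "X = (\<lambda>j::nat. if j = 0 then indicator S else if j = 1 then (\<lambda>\<omega>. f (w a \<omega>)) else (\<lambda>\<omega>. g (w b \<omega>)))"
  have Sev: "S \<in> events" using S_events[OF S] .
  have Si: "integrable M (indicator S :: 'a \<Rightarrow> real)"
    using Sev by (simp add: integrable_indicator_iff less_top[symmetric] Int_absorb2 sets.sets_into_space)
  have wa[measurable]: "w a \<in> borel_measurable M" "w b \<in> borel_measurable M" by (rule wM)+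
  have Xs: "X j \<in> sigma (space M) (\<Union>i\<in>I j. Ep i) \<rightarrow>\<^sub>M borel" if "j \<in> J" for j
  proof -
    have "j = 0 \<or> j = 1 \<or> j = 2" using that by (simp add: J_def)
    then consider "j = 0" | "j = 1" | "j = 2" by blast
    then show ?thesis
    proof cases
      case 1
      have "S \<in> sets (sigma (space M) (Ec c))"
        using S Ec_Pow by (simp add: sets_measure_of)
      then show ?thesis using 1 by (simp add: X_def I_def Ec_def[symmetric] borel_measurable_indicator)
    next
      case 2
      have "(\<lambda>\<omega>. f (w a \<omega>)) \<in> sigma (space M) (Ep (PW a)) \<rightarrow>\<^sub>M borel"
        using measurable_compose[OF w_sig_meas f] .
      then show ?thesis using 2 by (simp add: X_def I_def)
    next
      case 3
      have "(\<lambda>\<omega>. g (w b \<omega>)) \<in> sigma (space M) (Ep (PW b)) \<rightarrow>\<^sub>M borel"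
        using measurable_compose[OF w_sig_meas g] .
      then show ?thesis using 3 by (simp add: X_def I_def)
    qed
  qed
  have iv: "indep_vars (\<lambda>_. borel) X J"
    unfolding indep_vars_def2
  proof
    show "\<forall>j\<in>J. random_variable borel (X j)" using Sev by (auto simp: X_def J_def)
    show "indep_sets (\<lambda>j. {X j -` A \<inter> space M |A. A \<in> sets borel}) J"
    proof (rule indep_sets_mono_sets[OF IS])
      fix j assume "j \<in> J"
      show "{X j -` A \<inter> space M |A. A \<in> sets borel} \<subseteq> sigma_sets (space M) (\<Union>i\<in>I j. Ep i)"
        by (rule sigma_vimage_sub[OF Xs[OF \<open>j \<in> J\<close>]]) (use prim_Pow in blast)
    qed
  qed
  have intX: "integrable M (X j)" if "j \<in> J" for j
    using fi gi Si by (auto simp: X_def J_def)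
  have "(\<integral>\<omega>. (\<Prod>j\<in>J. X j \<omega>) \<partial>M) = (\<Prod>j\<in>J. \<integral>\<omega>. X j \<omega> \<partial>M)"
    by (rule indep_vars_lebesgue_integral[OF _ iv intX]) (auto simp: J_def)
  then show ?thesis using Sev by (simp add: J_def X_def mult.assoc)
qed

lemma nth_meas: "(\<lambda>v::real^'n. v $ l) \<in> borel_measurable borel"
  by measurable

lemma mom1:
  assumes S: "S \<in> sigma_sets (space M) (Ec c)" and a: "k - c \<le> a"
  shows "(\<integral>\<omega>. indicator S \<omega> * w a \<omega> $ l \<partial>M) = 0"
proof -
  have "(\<integral>\<omega>. indicator S \<omega> * w a \<omega> $ l \<partial>M) = prob S * expectation (\<lambda>\<omega>. w a \<omega> $ l)"
    by (rule indep2[OF S a nth_meas w_comp(1)])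
  then show ?thesis by (simp only: w_comp(2) mult_zero_right)
qed

lemma mom2:
  assumes S: "S \<in> sigma_sets (space M) (Ec c)" and a: "k - c \<le> a" and b: "k - c \<le> b"
  shows "(\<integral>\<omega>. indicator S \<omega> * (w a \<omega> $ l * w b \<omega> $ l') \<partial>M) = prob S * (if a = b then W $ l $ l' else 0)"
proof (cases "a = b")
  case True
  have m: "(\<lambda>v::real^'n. v $ l * v $ l') \<in> borel_measurable borel"
    using borel_measurable_times[OF nth_meas nth_meas] .
  have "(\<integral>\<omega>. indicator S \<omega> * (w a \<omega> $ l * w a \<omega> $ l') \<partial>M) = prob S * expectation (\<lambda>\<omega>. w a \<omega> $ l * w a \<omega> $ l')"
    by (rule indep2[OF S a m w_prod(1)])
  then show ?thesis using True by (simp add: w_prod(2))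
next
  case False
  have "(\<integral>\<omega>. indicator S \<omega> * (w a \<omega> $ l * w b \<omega> $ l') \<partial>M) = prob S * expectation (\<lambda>\<omega>. w a \<omega> $ l) * expectation (\<lambda>\<omega>. w b \<omega> $ l')"
    by (rule indep3[OF S a b False nth_meas w_comp(1) nth_meas w_comp(1)])
  then show ?thesis using False by (simp only: w_comp(2) mult_zero_right if_False)
qed

end

lemma int_cong: "integrable Mx f \<Longrightarrow> (\<And>\<omega>. \<omega> \<in> space Mx \<Longrightarrow> f \<omega> = g \<omega>) \<Longrightarrow> integrable Mx g"
  using Bochner_Integration.integrable_cong[OF refl, of Mx f g] by blast

lemma rand_idx_int:
  fixes G :: "'i::countable \<Rightarrow> 'a \<Rightarrow> 'b::{banach, second_countable_topology}"
  assumes Z: "Z \<in> Mx \<rightarrow>\<^sub>M count_space UNIV" and ZI: "\<And>\<omega>. \<omega> \<in> space Mx \<Longrightarrow> Z \<omega> \<in> I"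
    and fin: "finite I" and G: "\<And>i. i \<in> I \<Longrightarrow> integrable Mx (G i)"
  shows "integrable Mx (\<lambda>\<omega>. G (Z \<omega>) \<omega>)"
proof -
  have sets: "{\<omega>\<in>space Mx. Z \<omega> = i} \<in> sets Mx" for i
  proof -
    have "Z -` {i} \<inter> space Mx \<in> sets Mx" using measurable_sets[OF Z, of "{i}"] by simp
    moreover have "Z -` {i} \<inter> space Mx = {\<omega>\<in>space Mx. Z \<omega> = i}" by auto
    ultimately show ?thesis by simp
  qed
  have "integrable Mx (\<lambda>\<omega>. \<Sum>i\<in>I. indicator {\<omega>\<in>space Mx. Z \<omega> = i} \<omega> *\<^sub>R G i \<omega>)"
    by (rule Bochner_Integration.integrable_sum) (rule integrable_mult_indicator[OF sets G])
  moreover have "\<And>\<omega>. \<omega> \<in> space Mx \<Longrightarrow> (\<Sum>i\<in>I. indicator {\<omega>\<in>space Mx. Z \<omega> = i} \<omega> *\<^sub>R G i \<omega>) = G (Z \<omega>) \<omega>"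
  proof -
    fix \<omega> assume \<omega>: "\<omega> \<in> space Mx"
    have "(\<Sum>i\<in>I. indicator {\<omega>\<in>space Mx. Z \<omega> = i} \<omega> *\<^sub>R G i \<omega>) = (\<Sum>i\<in>I. if i = Z \<omega> then G i \<omega> else 0)"
      by (rule sum.cong) (use \<omega> in \<open>auto simp: indicator_def\<close>)
    also have "\<dots> = G (Z \<omega>) \<omega>" using ZI[OF \<omega>] fin by (simp add: sum.delta)
    finally show "?thesis \<omega>" .
  qed
  ultimately show ?thesis by (rule int_cong)
qed

lemma mv_int: fixes C :: "real^'p^'q" shows "integrable Mx f \<Longrightarrow> integrable Mx (\<lambda>\<omega>. C *v f \<omega>)"
  by (rule integrable_bounded_linear[OF matrix_vector_mul_bounded_linear])

lemma comp_int: "integrable Mx f \<Longrightarrow> integrable Mx (\<lambda>\<omega>. (f \<omega> :: real^'n) $ i)"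
  by (rule integrable_bounded_linear[OF bounded_linear_vec_nth])

lemma matpow_commute: "A ** matpow A n = matpow A n ** A"
  by (induction n) (auto simp: matrix_mul_assoc)

lemma matpow_mv_Suc: "matpow A n *v (A *v y) = matpow A (Suc n) *v y"
  by (simp add: matrix_vector_mul_assoc matpow_commute)

context lq begin

lemma w_int: "integrable M (w a)"
  by (rule vec_int) (rule w_comp(1))

lemma gM: "t \<le> Suc k \<Longrightarrow> zeta \<tau> t \<in> M \<rightarrow>\<^sub>M count_space UNIV"
  "s \<le> k \<Longrightarrow> \<delta> s \<in> M \<rightarrow>\<^sub>M count_space UNIV"
  "s \<le> k \<Longrightarrow> u s \<in> borel_measurable M"
  "s \<le> Suc k \<Longrightarrow> xhat s \<in> borel_measurable M"
  "s \<le> Suc k \<Longrightarrow> x s \<in> borel_measurable M"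
  "t \<le> Suc k \<Longrightarrow> (\<lambda>\<omega>. x (t - zeta \<tau> t \<omega>) \<omega>) \<in> borel_measurable M"
  using goodM unfolding good_def by auto

definition "ints j \<longleftrightarrow> (\<forall>i\<le>j. integrable M (x i) \<and> integrable M (xhat i)) \<and> (\<forall>i<j. integrable M (u i))"

lemma ints_ind: "j \<le> Suc k \<Longrightarrow> ints j"
proof (induction j)
  case 0
  have "integrable M (\<lambda>\<omega>. m0)" by simp
  then have "integrable M (xhat 0)" by (rule int_cong) (use est0 in auto)
  moreover have "integrable M (x 0)" by (rule vec_int) (rule x0_comp)
  ultimately show ?case unfolding ints_def by simp
next
  case (Suc j)
  then have jk: "j \<le> k" and I: "ints j" by auto
  have jN: "j \<le> N" using jk kN by simp
  have xhj: "integrable M (xhat j)" and xi: "\<And>i. i \<le> j \<Longrightarrow> integrable M (x i)"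
    and ui: "\<And>i. i < j \<Longrightarrow> integrable M (u i)" using I unfolding ints_def by auto
  have uj: "integrable M (u j)"
  proof -
    have "integrable M (\<lambda>\<omega>. - (gain_L A B Q R N j *v xhat j \<omega>))" using mv_int[OF xhj] by simp
    then show ?thesis by (rule int_cong) (use ctrl jN in auto)
  qed
  have us: "\<And>i. i \<le> j \<Longrightarrow> integrable M (u i)" using ui uj by (auto simp: le_less)
  have xS: "integrable M (x (Suc j))"
  proof -
    have "integrable M (\<lambda>\<omega>. A *v x j \<omega> + B *v u j \<omega> + w j \<omega>)"
      using Bochner_Integration.integrable_add[OF Bochner_Integration.integrable_add[OF mv_int[OF xi[of j]] mv_int[OF uj]] w_int] by simp
    then show ?thesis by (rule int_cong) (use dyn in auto)
  qed
  have xhS: "integrable M (xhat (Suc j))"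
  proof -
    define G2 where "G2 = (\<lambda>i \<omega>. matpow A (i + 1) *v x (j - i) \<omega> + (\<Sum>t\<le>i. matpow A t *v (B *v u (j - t) \<omega>)))"
    have G2i: "integrable M (G2 i)" if "i \<in> {..j}" for i
      unfolding G2_def using that
      by (intro Bochner_Integration.integrable_add Bochner_Integration.integrable_sum mv_int xi us) auto
    have T: "integrable M (\<lambda>\<omega>. G2 (zeta \<tau> j \<omega>) \<omega>)"
    proof (rule rand_idx_int[where I="{..j}"])
      show "zeta \<tau> j \<in> M \<rightarrow>\<^sub>M count_space UNIV" using gM(1) jk by simp
      show "\<And>\<omega>. \<omega> \<in> space M \<Longrightarrow> zeta \<tau> j \<omega> \<in> {..j}" using zeta_le by auto
      show "\<And>i. i \<in> {..j} \<Longrightarrow> integrable M (G2 i)" by (rule G2i)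
    qed simp
    define G1 where "G1 = (\<lambda>d \<omega>. if d then G2 (zeta \<tau> j \<omega>) \<omega> else A *v xhat j \<omega> + B *v u j \<omega>)"
    have G1i: "integrable M (G1 d)" for d
      unfolding G1_def using T Bochner_Integration.integrable_add[OF mv_int[OF xhj] mv_int[OF uj]] by (cases d) auto
    have "integrable M (\<lambda>\<omega>. G1 (\<delta> j \<omega>) \<omega>)"
    proof (rule rand_idx_int[where I=UNIV])
      show "\<delta> j \<in> M \<rightarrow>\<^sub>M count_space UNIV" using gM(2) jk by simp
      show "\<And>i. i \<in> UNIV \<Longrightarrow> integrable M (G1 i)" by (rule G1i)
    qed simp_all
    then show ?thesis by (rule int_cong) (use est in \<open>auto simp: G1_def G2_def\<close>)
  qed
  show ?case unfolding ints_def
    using I xS xhS uj unfolding ints_def by (auto simp: le_Suc_eq less_Suc_eq)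
qed

lemma x_int: "i \<le> Suc k \<Longrightarrow> integrable M (x i)"
  and xhat_int: "i \<le> Suc k \<Longrightarrow> integrable M (xhat i)"
  using ints_ind[of "Suc k"] unfolding ints_def by auto

lemma unroll:
  assumes "n \<le> j" "\<omega> \<in> space M"
  shows "x j \<omega> = matpow A n *v x (j - n) \<omega> + (\<Sum>t<n. matpow A t *v (B *v u (j - 1 - t) \<omega>))
                 + (\<Sum>t<n. matpow A t *v w (j - 1 - t) \<omega>)"
  using assms(1)
proof (induction n)
  case 0 then show ?case by simp
next
  case (Suc n)
  have e: "j - n = Suc (j - Suc n)" using Suc.prems by simp
  have "x (j - n) \<omega> = A *v x (j - Suc n) \<omega> + B *v u (j - Suc n) \<omega> + w (j - Suc n) \<omega>"
    unfolding e using dyn assms(2) by blast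
  then have "matpow A n *v x (j - n) \<omega> = matpow A (Suc n) *v x (j - Suc n) \<omega>
        + matpow A n *v (B *v u (j - 1 - n) \<omega>) + matpow A n *v w (j - 1 - n) \<omega>"
    by (simp add: matrix_vector_right_distrib matpow_mv_Suc del: matpow.simps)
  with Suc show ?case by (simp add: algebra_simps del: matpow.simps)
qed

end
context lq begin

lemma Ik_gen:
  assumes "rv_sets M Nm Y \<subseteq> info_sets M x u \<delta> \<tau> k" "space Nm = UNIV"
  shows "Y \<in> Ik \<rightarrow>\<^sub>M Nm"
  unfolding Ik_def info_alg_def by (rule rv_gen_meas[OF info_sets_Pow assms(1) refl assms(2)])

lemma Ik_z: "t \<le> k \<Longrightarrow> zeta \<tau> t \<in> Ik \<rightarrow>\<^sub>M count_space UNIV"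
  by (rule Ik_gen) (auto simp: info_sets_def)
lemma Ik_xz: "t \<le> k \<Longrightarrow> (\<lambda>\<omega>. x (t - zeta \<tau> t \<omega>) \<omega>) \<in> borel_measurable Ik"
  by (rule Ik_gen) (auto simp: info_sets_def)
lemma Ik_d: "s < k \<Longrightarrow> \<delta> s \<in> Ik \<rightarrow>\<^sub>M count_space UNIV"
  by (rule Ik_gen) (auto simp: info_sets_def)
lemma Ik_u: "s < k \<Longrightarrow> u s \<in> borel_measurable Ik"
  by (rule Ik_gen) (auto simp: info_sets_def)

lemma xhat_Ik: "s \<le> k \<Longrightarrow> xhat s \<in> borel_measurable Ik"
proof (induction s)
  case 0
  have "(\<lambda>\<omega>. m0) \<in> borel_measurable Ik" by simp
  then show ?case by (rule measurable_cong[THEN iffD1, rotated]) (use est0 space_Ik in auto)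
next
  case (Suc s)
  then have sk: "s < k" by simp
  show ?case
  proof (rule xhat_Suc_meas)
    show "xhat s \<in> borel_measurable Ik" using Suc by simp
    show "space Ik \<subseteq> space M" by (simp add: space_Ik)
    show "\<delta> s \<in> Ik \<rightarrow>\<^sub>M count_space UNIV" using Ik_d sk .
    show "zeta \<tau> s \<in> Ik \<rightarrow>\<^sub>M count_space UNIV" using Ik_z sk by simp
    show "(\<lambda>\<omega>. x (s - zeta \<tau> s \<omega>) \<omega>) \<in> borel_measurable Ik" using Ik_xz sk by simp
    show "\<And>s'. s' \<le> s \<Longrightarrow> u s' \<in> borel_measurable Ik" using Ik_u sk by simp
  qed
qed

definition "Vv \<omega> = (\<Sum>t<Suc (zeta \<tau> k \<omega>). matpow A t *v w (k - t) \<omega>)"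
definition "Vp \<omega> = (\<Sum>t<zeta \<tau> k \<omega>. matpow A t *v w (k - 1 - t) \<omega>)"
definition "Dp \<omega> = matpow A (zeta \<tau> k \<omega>) *v x (k - zeta \<tau> k \<omega>) \<omega> + (\<Sum>t<zeta \<tau> k \<omega>. matpow A t *v (B *v u (k - 1 - t) \<omega>))"
definition "ee \<omega> = x (Suc k) \<omega> - xhat (Suc k) \<omega>"
definition "Dm \<omega> = (if \<delta> k \<omega> then 0 else A *v (Dp \<omega> - xhat k \<omega>))"

lemma Dp_Ik: "Dp \<in> borel_measurable Ik"
proof -
  define X where "X = (\<lambda>\<omega>. x (k - zeta \<tau> k \<omega>) \<omega>)"
  have X: "X \<in> borel_measurable Ik" unfolding X_def using Ik_xz by simp
  define H where "H = (\<lambda>i \<omega>. if i \<le> k then matpow A i *v X \<omega> + (\<Sum>t<i. matpow A t *v (B *v u (k - 1 - t) \<omega>)) else 0)"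
  have "(\<lambda>\<omega>. H (zeta \<tau> k \<omega>) \<omega>) \<in> borel_measurable Ik"
  proof (rule measurable_compose_countable[OF _ Ik_z[OF order_refl]])
    fix i show "H i \<in> borel_measurable Ik"
    proof (cases "i \<le> k")
      case True
      have s: "(\<lambda>\<omega>. \<Sum>t<i. matpow A t *v (B *v u (k - 1 - t) \<omega>)) \<in> borel_measurable Ik"
        by (intro borel_measurable_sum mv_meas Ik_u) (use True in auto)
      show ?thesis using True borel_measurable_add[OF mv_meas[OF X] s] by (simp add: H_def)
    qed (simp add: H_def)
  qed
  then show ?thesis
    by (rule measurable_cong[THEN iffD1, rotated]) (use zeta_le[of \<tau> k] in \<open>auto simp: H_def Dp_def X_def space_Ik\<close>)
qed

lemma Fm_dk: "\<delta> k \<in> Fm \<rightarrow>\<^sub>M count_space UNIV"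
proof -
  have "info_sets M x u \<delta> \<tau> k \<union> rv_sets M (count_space UNIV) (\<delta> k) \<subseteq> Pow (space M)"
    using info_sets_Pow rv_sets_Pow by blast
  then show ?thesis unfolding Fm_def by (rule rv_gen_meas) auto
qed

lemma Ik_Fm: "f \<in> Ik \<rightarrow>\<^sub>M Nm \<Longrightarrow> f \<in> Fm \<rightarrow>\<^sub>M Nm"
  by (rule measurable_from_subalg[OF subalg_Fm_Ik])

lemma Dm_Fm: "Dm \<in> borel_measurable Fm"
proof -
  have a: "(\<lambda>\<omega>. A *v (Dp \<omega> - xhat k \<omega>)) \<in> borel_measurable Fm"
    using Ik_Fm[OF Dp_Ik] Ik_Fm[OF xhat_Ik[OF order_refl]] by (intro mv_meas) measurable
  have "(\<lambda>\<omega>. (\<lambda>d \<omega>. if d then 0 else A *v (Dp \<omega> - xhat k \<omega>)) (\<delta> k \<omega>) \<omega>) \<in> borel_measurable Fm"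
  proof (rule measurable_compose_countable[OF _ Fm_dk])
    fix d :: bool show "(\<lambda>\<omega>. if d then 0 else A *v (Dp \<omega> - xhat k \<omega>)) \<in> borel_measurable Fm"
      using a by (cases d) auto
  qed
  then show ?thesis by (simp add: Dm_def[abs_def])
qed

lemma xk_dec: "\<omega> \<in> space M \<Longrightarrow> x k \<omega> = Dp \<omega> + Vp \<omega>"
  using unroll[OF zeta_le[of \<tau> k \<omega>]] by (simp add: Dp_def Vp_def add.assoc)

lemma Vv_eq: "Vv \<omega> = w k \<omega> + A *v Vp \<omega>"
proof -
  have "Vv \<omega> = matpow A 0 *v w (k - 0) \<omega> + (\<Sum>t<zeta \<tau> k \<omega>. matpow A (Suc t) *v w (k - Suc t) \<omega>)"
    unfolding Vv_def by (rule sum.lessThan_Suc_shift)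
  also have "\<dots> = w k \<omega> + (\<Sum>t<zeta \<tau> k \<omega>. A *v (matpow A t *v w (k - 1 - t) \<omega>))"
    by (simp add: matrix_vector_mul_assoc)
  also have "\<dots> = w k \<omega> + A *v Vp \<omega>"
    unfolding Vp_def by (simp add: real_vector.linear_sum[OF matrix_vector_mul_linear])
  finally show ?thesis .
qed

lemma e_dec: "\<omega> \<in> space M \<Longrightarrow> ee \<omega> = Dm \<omega> + Vv \<omega>"
proof -
  assume \<omega>: "\<omega> \<in> space M"
  let ?z = "zeta \<tau> k \<omega>"
  show ?thesis
  proof (cases "\<delta> k \<omega>")
    case True
    have xs: "x (Suc k) \<omega> = matpow A (Suc ?z) *v x (k - ?z) \<omega> + (\<Sum>t<Suc ?z. matpow A t *v (B *v u (k - t) \<omega>))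
                 + (\<Sum>t<Suc ?z. matpow A t *v w (k - t) \<omega>)"
      using unroll[of "Suc ?z" "Suc k" \<omega>] zeta_le[of \<tau> k \<omega>] \<omega> by simp
    have xh: "xhat (Suc k) \<omega> = matpow A (Suc ?z) *v x (k - ?z) \<omega> + (\<Sum>t<Suc ?z. matpow A t *v (B *v u (k - t) \<omega>))"
      using est \<omega> True by (simp add: lessThan_Suc_atMost del: matpow.simps)
    show ?thesis using True xs xh by (simp add: ee_def Dm_def Vv_def del: matpow.simps)
  next
    case False
    have xs: "x (Suc k) \<omega> = A *v x k \<omega> + B *v u k \<omega> + w k \<omega>" using dyn \<omega> by blast
    have xh: "xhat (Suc k) \<omega> = A *v xhat k \<omega> + B *v u k \<omega>" using est \<omega> False by simp
    have "ee \<omega> = A *v (Dp \<omega> + Vp \<omega>) + w k \<omega> - A *v xhat k \<omega>"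
      using xs xh xk_dec[OF \<omega>] by (simp add: ee_def)
    also have "\<dots> = A *v (Dp \<omega> - xhat k \<omega>) + (w k \<omega> + A *v Vp \<omega>)"
      by (simp add: matrix_vector_right_distrib matrix_vector_mult_diff_distrib algebra_simps)
    finally show ?thesis using False by (simp add: Dm_def Vv_eq)
  qed
qed

definition "VC c \<omega> = (\<Sum>t<Suc c. matpow A t *v w (k - t) \<omega>)"
definition "VPC c \<omega> = (\<Sum>t<c. matpow A t *v w (k - 1 - t) \<omega>)"

lemma Vv_VC: "Vv \<omega> = VC (zeta \<tau> k \<omega>) \<omega>" by (simp add: Vv_def VC_def)
lemma Vp_VPC: "Vp \<omega> = VPC (zeta \<tau> k \<omega>) \<omega>" by (simp add: Vp_def VPC_def)

lemma zk_M: "zeta \<tau> k \<in> M \<rightarrow>\<^sub>M count_space UNIV" using gM(1) by simp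

lemma Vv_int: "integrable M Vv"
proof -
  have "integrable M (\<lambda>\<omega>. VC (zeta \<tau> k \<omega>) \<omega>)"
  proof (rule rand_idx_int[where I="{..k}", OF zk_M])
    show "\<And>i. i \<in> {..k} \<Longrightarrow> integrable M (VC i)"
      unfolding VC_def by (intro Bochner_Integration.integrable_sum mv_int w_int)
  qed (use zeta_le in auto)
  then show ?thesis by (simp add: Vv_VC[abs_def])
qed

lemma Vp_int: "integrable M Vp"
proof -
  have "integrable M (\<lambda>\<omega>. VPC (zeta \<tau> k \<omega>) \<omega>)"
  proof (rule rand_idx_int[where I="{..k}", OF zk_M])
    show "\<And>i. i \<in> {..k} \<Longrightarrow> integrable M (VPC i)"
      unfolding VPC_def by (intro Bochner_Integration.integrable_sum mv_int w_int)
  qed (use zeta_le in auto)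
  then show ?thesis by (simp add: Vp_VPC[abs_def])
qed

lemma ee_int: "integrable M ee"
  unfolding ee_def[abs_def] using x_int[of "Suc k"] xhat_int[of "Suc k"] by auto

lemma Dm_int: "integrable M Dm"
  by (rule int_cong[OF Bochner_Integration.integrable_diff[OF ee_int Vv_int]]) (simp add: e_dec)

lemma Dp_int: "integrable M Dp"
proof (rule int_cong[OF Bochner_Integration.integrable_diff[OF x_int[of k] Vp_int]])
  fix \<omega> assume "\<omega> \<in> space M"
  from xk_dec[OF this] show "x k \<omega> - Vp \<omega> = Dp \<omega>" by simp
qed simp

end

lemma mat_entry: fixes P W :: "real^'n^'n"
  shows "(P ** W ** transpose P) $ i $ j = (\<Sum>l\<in>UNIV. \<Sum>l'\<in>UNIV. P $ i $ l * P $ j $ l' * W $ l $ l')"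
proof -
  have "(P ** W ** transpose P) $ i $ j = (\<Sum>l'\<in>UNIV. \<Sum>l\<in>UNIV. P $ i $ l * P $ j $ l' * W $ l $ l')"
    by (simp add: matrix_matrix_mult_def transpose_def sum_distrib_left sum_distrib_right mult_ac)
  also have "\<dots> = (\<Sum>l\<in>UNIV. \<Sum>l'\<in>UNIV. P $ i $ l * P $ j $ l' * W $ l $ l')"
    by (rule sum.swap)
  finally show ?thesis .
qed

lemma onS: fixes f g :: "'a \<Rightarrow> real" shows "(\<And>\<omega>. \<omega> \<in> S \<Longrightarrow> f \<omega> = g \<omega>) \<Longrightarrow> (\<integral>\<omega>. indicator S \<omega> * f \<omega> \<partial>Mx) = (\<integral>\<omega>. indicator S \<omega> * g \<omega> \<partial>Mx)"
  by (intro Bochner_Integration.integral_cong) (auto simp: indicator_def)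

lemma ind_int: "S \<in> sets Mx \<Longrightarrow> integrable Mx f \<Longrightarrow> integrable Mx (\<lambda>\<omega>. indicator S \<omega> * (f \<omega> :: real))"
  using integrable_mult_indicator[of S Mx f] by simp

context lq begin

lemma Zc_ev: "Zc c \<in> events"
proof -
  have "zeta \<tau> k -` {c} \<inter> space M \<in> events" using measurable_sets[OF zk_M, of "{c}"] by simp
  moreover have "zeta \<tau> k -` {c} \<inter> space M = Zc c" by (auto simp: Zc_def)
  ultimately show ?thesis by simp
qed

lemma part:
  fixes f :: "'a \<Rightarrow> real"
  assumes f: "integrable M f" and G: "G \<in> events"
  shows "(\<integral>\<omega>. indicator G \<omega> * f \<omega> \<partial>M) = (\<Sum>c\<le>k. \<integral>\<omega>. indicator (G \<inter> Zc c) \<omega> * f \<omega> \<partial>M)"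
proof -
  have int: "integrable M (\<lambda>\<omega>. indicator (G \<inter> Zc c) \<omega> * f \<omega>)" for c
    by (rule ind_int[OF _ f]) (use G Zc_ev in auto)
  have "(\<Sum>c\<le>k. \<integral>\<omega>. indicator (G \<inter> Zc c) \<omega> * f \<omega> \<partial>M) = (\<integral>\<omega>. (\<Sum>c\<le>k. indicator (G \<inter> Zc c) \<omega> * f \<omega>) \<partial>M)"
    by (rule Bochner_Integration.integral_sum[symmetric]) (rule int)
  also have "\<dots> = (\<integral>\<omega>. indicator G \<omega> * f \<omega> \<partial>M)"
  proof (rule Bochner_Integration.integral_cong[OF refl])
    fix \<omega> assume \<omega>: "\<omega> \<in> space M"
    have "(\<Sum>c\<le>k. indicator (G \<inter> Zc c) \<omega> * f \<omega>) = (\<Sum>c\<le>k. if c = zeta \<tau> k \<omega> then indicator G \<omega> * f \<omega> else 0)"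
      by (rule sum.cong) (use \<omega> in \<open>auto simp: indicator_def Zc_def\<close>)
    also have "\<dots> = indicator G \<omega> * f \<omega>" using zeta_le[of \<tau> k \<omega>] by (simp add: sum.delta')
    finally show "(\<Sum>c\<le>k. indicator (G \<inter> Zc c) \<omega> * f \<omega>) = indicator G \<omega> * f \<omega>" .
  qed
  finally show ?thesis by simp
qed

lemma ind_w_int: "S \<in> events \<Longrightarrow> integrable M (\<lambda>\<omega>. indicator S \<omega> * w a \<omega> $ l)"
  by (rule ind_int[OF _ w_comp(1)])
lemma ind_ww_int: "S \<in> events \<Longrightarrow> integrable M (\<lambda>\<omega>. indicator S \<omega> * (w a \<omega> $ l * w b \<omega> $ l'))"
  by (rule ind_int[OF _ w_prod_int])

lemma int_lin:
  assumes S: "S \<in> sigma_sets (space M) (Ec c)" and idx: "\<And>t. t \<in> T \<Longrightarrow> k - c \<le> idx t" and fin: "finite T"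
  shows "(\<integral>\<omega>. indicator S \<omega> * (\<Sum>t\<in>T. \<Sum>l\<in>UNIV. a t l * w (idx t) \<omega> $ l) \<partial>M) = 0"
proof -
  have Sev: "S \<in> events" using S_events[OF S] .
  have "(\<integral>\<omega>. indicator S \<omega> * (\<Sum>t\<in>T. \<Sum>l\<in>UNIV. a t l * w (idx t) \<omega> $ l) \<partial>M)
      = (\<integral>\<omega>. (\<Sum>t\<in>T. \<Sum>l\<in>UNIV. a t l * (indicator S \<omega> * w (idx t) \<omega> $ l)) \<partial>M)"
    by (simp add: sum_distrib_left mult.left_commute)
  also have "\<dots> = (\<Sum>t\<in>T. \<integral>\<omega>. (\<Sum>l\<in>UNIV. a t l * (indicator S \<omega> * w (idx t) \<omega> $ l)) \<partial>M)"
    by (intro Bochner_Integration.integral_sum Bochner_Integration.integrable_sum integrable_mult_right ind_w_int Sev)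
  also have "\<dots> = (\<Sum>t\<in>T. \<Sum>l\<in>UNIV. a t l * (\<integral>\<omega>. indicator S \<omega> * w (idx t) \<omega> $ l \<partial>M))"
    by (intro sum.cong refl, subst Bochner_Integration.integral_sum)
       (auto intro!: integrable_mult_right ind_w_int Sev)
  also have "\<dots> = 0" using mom1[OF S idx] by simp
  finally show ?thesis .
qed

lemma lin_int: "integrable M (\<lambda>\<omega>. \<Sum>t\<in>T. \<Sum>l\<in>UNIV. a t l * w (idx t) \<omega> $ l)"
  by (intro Bochner_Integration.integrable_sum integrable_mult_right w_comp(1))

lemma prod_expand:
  fixes f :: "'i \<Rightarrow> 'n \<Rightarrow> real" and g :: "'j \<Rightarrow> 'n \<Rightarrow> real"
  shows "(\<Sum>t\<in>T. \<Sum>l\<in>UNIV. f t l) * (\<Sum>s\<in>T'. \<Sum>l'\<in>UNIV. g s l') = (\<Sum>t\<in>T. \<Sum>s\<in>T'. \<Sum>l\<in>UNIV. \<Sum>l'\<in>UNIV. f t l * g s l')"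
  by (simp add: sum_product)

lemma quad_int: "integrable M (\<lambda>\<omega>. (\<Sum>t\<in>T. \<Sum>l\<in>UNIV. a t l * w (idx t) \<omega> $ l) * (\<Sum>s\<in>T'. \<Sum>l'\<in>UNIV. b s l' * w (idx' s) \<omega> $ l'))"
proof -
  have eq: "(\<Sum>t\<in>T. \<Sum>l\<in>UNIV. a t l * w (idx t) \<omega> $ l) * (\<Sum>s\<in>T'. \<Sum>l'\<in>UNIV. b s l' * w (idx' s) \<omega> $ l')
     = (\<Sum>t\<in>T. \<Sum>s\<in>T'. \<Sum>l\<in>UNIV. \<Sum>l'\<in>UNIV. (a t l * b s l') * (w (idx t) \<omega> $ l * w (idx' s) \<omega> $ l'))" for \<omega>
    by (subst prod_expand[where f="\<lambda>t l. a t l * w (idx t) \<omega> $ l" and g="\<lambda>s l'. b s l' * w (idx' s) \<omega> $ l'"]) (simp add: mult_ac)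
  have "integrable M (\<lambda>\<omega>. \<Sum>t\<in>T. \<Sum>s\<in>T'. \<Sum>l\<in>UNIV. \<Sum>l'\<in>UNIV. (a t l * b s l') * (w (idx t) \<omega> $ l * w (idx' s) \<omega> $ l'))"
    by (intro Bochner_Integration.integrable_sum integrable_mult_right w_prod_int)
  then show ?thesis by (simp only: eq)
qed

lemma int_quad:
  assumes S: "S \<in> sigma_sets (space M) (Ec c)" and idx: "\<And>t. t \<in> T \<Longrightarrow> k - c \<le> idx t"
    and inj: "inj_on idx T" and fin: "finite T"
  shows "(\<integral>\<omega>. indicator S \<omega> * ((\<Sum>t\<in>T. \<Sum>l\<in>UNIV. a t l * w (idx t) \<omega> $ l) * (\<Sum>s\<in>T. \<Sum>l'\<in>UNIV. b s l' * w (idx s) \<omega> $ l')) \<partial>M)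
     = prob S * (\<Sum>t\<in>T. \<Sum>l\<in>UNIV. \<Sum>l'\<in>UNIV. a t l * b t l' * W $ l $ l')"
proof -
  have Sev: "S \<in> events" using S_events[OF S] .
  have eq: "indicator S \<omega> * ((\<Sum>t\<in>T. \<Sum>l\<in>UNIV. a t l * w (idx t) \<omega> $ l) * (\<Sum>s\<in>T. \<Sum>l'\<in>UNIV. b s l' * w (idx s) \<omega> $ l'))
     = (\<Sum>t\<in>T. \<Sum>s\<in>T. \<Sum>l\<in>UNIV. \<Sum>l'\<in>UNIV. (a t l * b s l') * (indicator S \<omega> * (w (idx t) \<omega> $ l * w (idx s) \<omega> $ l')))" for \<omega>
    by (subst prod_expand[where f="\<lambda>t l. a t l * w (idx t) \<omega> $ l" and g="\<lambda>s l'. b s l' * w (idx s) \<omega> $ l'"]) (simp add: sum_distrib_left mult_ac)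
  have "(\<integral>\<omega>. indicator S \<omega> * ((\<Sum>t\<in>T. \<Sum>l\<in>UNIV. a t l * w (idx t) \<omega> $ l) * (\<Sum>s\<in>T. \<Sum>l'\<in>UNIV. b s l' * w (idx s) \<omega> $ l')) \<partial>M)
     = (\<integral>\<omega>. (\<Sum>t\<in>T. \<Sum>s\<in>T. \<Sum>l\<in>UNIV. \<Sum>l'\<in>UNIV. (a t l * b s l') * (indicator S \<omega> * (w (idx t) \<omega> $ l * w (idx s) \<omega> $ l'))) \<partial>M)"
    by (simp only: eq)
  also have "\<dots> = (\<Sum>t\<in>T. \<Sum>s\<in>T. \<Sum>l\<in>UNIV. \<Sum>l'\<in>UNIV. (a t l * b s l') * (\<integral>\<omega>. indicator S \<omega> * (w (idx t) \<omega> $ l * w (idx s) \<omega> $ l') \<partial>M))"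
    by (simp add: Bochner_Integration.integral_sum Bochner_Integration.integrable_sum integrable_mult_right ind_ww_int Sev)
  also have "\<dots> = (\<Sum>t\<in>T. \<Sum>s\<in>T. \<Sum>l\<in>UNIV. \<Sum>l'\<in>UNIV. (a t l * b s l') * (prob S * (if idx t = idx s then W $ l $ l' else 0)))"
    using mom2[OF S idx idx] by simp
  also have "\<dots> = (\<Sum>t\<in>T. \<Sum>s\<in>T. if s = t then (\<Sum>l\<in>UNIV. \<Sum>l'\<in>UNIV. (a t l * b t l') * (prob S * W $ l $ l')) else 0)"
  proof (intro sum.cong refl)
    fix t s assume t: "t \<in> T" and s: "s \<in> T"
    have "idx t = idx s \<longleftrightarrow> s = t" using inj t s unfolding inj_on_def by metis
    then show "(\<Sum>l\<in>UNIV. \<Sum>l'\<in>UNIV. (a t l * b s l') * (prob S * (if idx t = idx s then W $ l $ l' else 0)))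
       = (if s = t then (\<Sum>l\<in>UNIV. \<Sum>l'\<in>UNIV. (a t l * b t l') * (prob S * W $ l $ l')) else 0)"
      by auto
  qed
  also have "\<dots> = prob S * (\<Sum>t\<in>T. \<Sum>l\<in>UNIV. \<Sum>l'\<in>UNIV. a t l * b t l' * W $ l $ l')"
    using fin by (simp add: sum.delta' sum_distrib_left mult_ac)
  finally show ?thesis .
qed

end
context lq begin

definition "Yc c = (\<Sum>t\<le>c. matpow A t ** W ** transpose (matpow A t))"

lemma VC_comp: "VC c \<omega> $ i = (\<Sum>t\<in>{..<Suc c}. \<Sum>l\<in>UNIV. matpow A t $ i $ l * w (k - t) \<omega> $ l)"
  by (simp add: VC_def sum_component matrix_vector_mult_def)
lemma VPC_comp: "VPC c \<omega> $ i = (\<Sum>t\<in>{..<c}. \<Sum>l\<in>UNIV. matpow A t $ i $ l * w (k - 1 - t) \<omega> $ l)"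
  by (simp add: VPC_def sum_component matrix_vector_mult_def)

lemma Fm_ev: "G \<in> sets Fm \<Longrightarrow> G \<in> events"
  using subalg_Fm unfolding subalgebra_def by auto

lemma onZ: "\<omega> \<in> G \<inter> Zc c \<Longrightarrow> zeta \<tau> k \<omega> = c"
  by (simp add: Zc_def)

lemma intV: assumes G: "G \<in> sets Fm" shows "(\<integral>\<omega>. indicator G \<omega> * Vv \<omega> $ i \<partial>M) = 0"
proof -
  have "(\<integral>\<omega>. indicator G \<omega> * Vv \<omega> $ i \<partial>M) = (\<Sum>c\<le>k. \<integral>\<omega>. indicator (G \<inter> Zc c) \<omega> * Vv \<omega> $ i \<partial>M)"
    by (rule part[OF comp_int[OF Vv_int] Fm_ev[OF G]])
  also have "\<dots> = (\<Sum>c\<le>k. \<integral>\<omega>. indicator (G \<inter> Zc c) \<omega> * (\<Sum>t\<in>{..<Suc c}. \<Sum>l\<in>UNIV. matpow A t $ i $ l * w (k - t) \<omega> $ l) \<partial>M)"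
    by (intro sum.cong refl onS) (simp add: Vv_VC VC_comp onZ)
  also have "\<dots> = 0"
    by (intro sum.neutral ballI int_lin[OF key_trace[OF G]]) auto
  finally show ?thesis .
qed

lemma intVp: assumes G: "G \<in> sets Fm" shows "(\<integral>\<omega>. indicator G \<omega> * Vp \<omega> $ i \<partial>M) = 0"
proof -
  have "(\<integral>\<omega>. indicator G \<omega> * Vp \<omega> $ i \<partial>M) = (\<Sum>c\<le>k. \<integral>\<omega>. indicator (G \<inter> Zc c) \<omega> * Vp \<omega> $ i \<partial>M)"
    by (rule part[OF comp_int[OF Vp_int] Fm_ev[OF G]])
  also have "\<dots> = (\<Sum>c\<le>k. \<integral>\<omega>. indicator (G \<inter> Zc c) \<omega> * (\<Sum>t\<in>{..<c}. \<Sum>l\<in>UNIV. matpow A t $ i $ l * w (k - 1 - t) \<omega> $ l) \<partial>M)"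
    by (intro sum.cong refl onS) (simp add: Vp_VPC VPC_comp onZ)
  also have "\<dots> = 0"
    by (intro sum.neutral ballI int_lin[OF key_trace[OF G]]) auto
  finally show ?thesis .
qed

lemma VV_int: "integrable M (\<lambda>\<omega>. Vv \<omega> $ i * Vv \<omega> $ j)"
proof -
  have "integrable M (\<lambda>\<omega>. (\<lambda>c \<omega>. VC c \<omega> $ i * VC c \<omega> $ j) (zeta \<tau> k \<omega>) \<omega>)"
  proof (rule rand_idx_int[where I="{..k}", OF zk_M])
    show "\<And>c. c \<in> {..k} \<Longrightarrow> integrable M (\<lambda>\<omega>. VC c \<omega> $ i * VC c \<omega> $ j)"
      unfolding VC_comp by (rule quad_int)
  qed (use zeta_le in auto)
  then show ?thesis by (simp add: Vv_VC)
qed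

lemma Y_int: "integrable M (\<lambda>\<omega>. Yc (zeta \<tau> k \<omega>) $ i $ j)"
  by (rule rand_idx_int[where I="{..k}" and G="\<lambda>c \<omega>. Yc c $ i $ j", OF zk_M]) (use zeta_le in auto)

lemma Yc_entry: "Yc c $ i $ j = (\<Sum>t\<in>{..<Suc c}. \<Sum>l\<in>UNIV. \<Sum>l'\<in>UNIV. matpow A t $ i $ l * matpow A t $ j $ l' * W $ l $ l')"
  by (simp add: Yc_def sum_component mat_entry lessThan_Suc_atMost)

lemma intVV: assumes G: "G \<in> sets Fm"
  shows "(\<integral>\<omega>. indicator G \<omega> * (Vv \<omega> $ i * Vv \<omega> $ j) \<partial>M) = (\<integral>\<omega>. indicator G \<omega> * Yc (zeta \<tau> k \<omega>) $ i $ j \<partial>M)"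
proof -
  have "(\<integral>\<omega>. indicator G \<omega> * (Vv \<omega> $ i * Vv \<omega> $ j) \<partial>M) = (\<Sum>c\<le>k. \<integral>\<omega>. indicator (G \<inter> Zc c) \<omega> * (Vv \<omega> $ i * Vv \<omega> $ j) \<partial>M)"
    by (rule part[OF VV_int Fm_ev[OF G]])
  also have "\<dots> = (\<Sum>c\<le>k. \<integral>\<omega>. indicator (G \<inter> Zc c) \<omega> * ((\<Sum>t\<in>{..<Suc c}. \<Sum>l\<in>UNIV. matpow A t $ i $ l * w (k - t) \<omega> $ l)
        * (\<Sum>s\<in>{..<Suc c}. \<Sum>l'\<in>UNIV. matpow A s $ j $ l' * w (k - s) \<omega> $ l')) \<partial>M)"
    by (intro sum.cong refl onS) (simp add: Vv_VC VC_comp onZ)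
  also have "\<dots> = (\<Sum>c\<le>k. prob (G \<inter> Zc c) * Yc c $ i $ j)"
  proof (intro sum.cong refl)
    fix c assume c: "c \<in> {..k}"
    have inj: "inj_on (\<lambda>t. k - t) {..<Suc c}" using c by (auto simp: inj_on_def)
    show "(\<integral>\<omega>. indicator (G \<inter> Zc c) \<omega> * ((\<Sum>t\<in>{..<Suc c}. \<Sum>l\<in>UNIV. matpow A t $ i $ l * w (k - t) \<omega> $ l)
        * (\<Sum>s\<in>{..<Suc c}. \<Sum>l'\<in>UNIV. matpow A s $ j $ l' * w (k - s) \<omega> $ l')) \<partial>M) = prob (G \<inter> Zc c) * Yc c $ i $ j"
      unfolding Yc_entry by (rule int_quad[OF key_trace[OF G] _ inj]) auto
  qed
  also have "\<dots> = (\<Sum>c\<le>k. \<integral>\<omega>. indicator (G \<inter> Zc c) \<omega> * Yc c $ i $ j \<partial>M)"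
    using Fm_ev[OF G] Zc_ev by (intro sum.cong refl) (simp add: mult.commute)
  also have "\<dots> = (\<Sum>c\<le>k. \<integral>\<omega>. indicator (G \<inter> Zc c) \<omega> * Yc (zeta \<tau> k \<omega>) $ i $ j \<partial>M)"
    by (intro sum.cong refl onS) (simp add: onZ)
  also have "\<dots> = (\<integral>\<omega>. indicator G \<omega> * Yc (zeta \<tau> k \<omega>) $ i $ j \<partial>M)"
    by (rule part[OF Y_int Fm_ev[OF G], symmetric])
  finally show ?thesis .
qed

lemma intDm: assumes G: "G \<in> sets Fm"
  shows "(\<integral>\<omega>. indicator G \<omega> * ee \<omega> $ i \<partial>M) = (\<integral>\<omega>. indicator G \<omega> * Dm \<omega> $ i \<partial>M)"
proof -
  have Gev: "G \<in> events" using Fm_ev[OF G] .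
  have "(\<integral>\<omega>. indicator G \<omega> * ee \<omega> $ i \<partial>M) = (\<integral>\<omega>. indicator G \<omega> * Dm \<omega> $ i + indicator G \<omega> * Vv \<omega> $ i \<partial>M)"
    by (rule Bochner_Integration.integral_cong[OF refl]) (simp add: e_dec distrib_left)
  also have "\<dots> = (\<integral>\<omega>. indicator G \<omega> * Dm \<omega> $ i \<partial>M) + (\<integral>\<omega>. indicator G \<omega> * Vv \<omega> $ i \<partial>M)"
    by (rule Bochner_Integration.integral_add) (intro ind_int Gev comp_int Dm_int Vv_int)+
  finally show ?thesis using intV[OF G] by simp
qed

lemma Ik_Fm_sets: "G \<in> sets Ik \<Longrightarrow> G \<in> sets Fm"
  using subalg_Fm_Ik unfolding subalgebra_def by auto

lemma intDp: assumes G: "G \<in> sets Ik"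
  shows "(\<integral>\<omega>. indicator G \<omega> * x k \<omega> $ i \<partial>M) = (\<integral>\<omega>. indicator G \<omega> * Dp \<omega> $ i \<partial>M)"
proof -
  have GF: "G \<in> sets Fm" using Ik_Fm_sets[OF G] .
  have Gev: "G \<in> events" using Fm_ev[OF GF] .
  have "(\<integral>\<omega>. indicator G \<omega> * x k \<omega> $ i \<partial>M) = (\<integral>\<omega>. indicator G \<omega> * Dp \<omega> $ i + indicator G \<omega> * Vp \<omega> $ i \<partial>M)"
    by (rule Bochner_Integration.integral_cong[OF refl]) (simp add: xk_dec distrib_left)
  also have "\<dots> = (\<integral>\<omega>. indicator G \<omega> * Dp \<omega> $ i \<partial>M) + (\<integral>\<omega>. indicator G \<omega> * Vp \<omega> $ i \<partial>M)"
    by (rule Bochner_Integration.integral_add) (intro ind_int Gev comp_int Dp_int Vp_int)+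
  finally show ?thesis using intVp[OF GF] by simp
qed

end
context lq begin

lemma AE_fin_all: "(\<And>i::'n. AE \<omega> in M. P i \<omega>) \<Longrightarrow> AE \<omega> in M. \<forall>i. P i \<omega>"
  using eventually_ball_finite[of "UNIV :: 'n set" "\<lambda>\<omega> i. P i \<omega>" "ae_filter M"] by auto

lemma sl: "\<And>A f. (set_lebesgue_integral M A f) = (\<integral>\<omega>. indicator A \<omega> * (f \<omega> :: real) \<partial>M)"
  by (simp add: set_lebesgue_integral_def)

lemma main:
  "let F = sigma (space M) (info_sets M x u \<delta> \<tau> k \<union> rv_sets M (count_space UNIV) (\<delta> k));
       e = (\<lambda>\<omega>. x (Suc k) \<omega> - xhat (Suc k) \<omega>);
       xcheck = cond_exp_vec M (info_alg M x u \<delta> \<tau> k) (x k)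
   in (AE \<omega> in M. cond_exp_vec M F e \<omega>
                   = (1 - of_bool (\<delta> k \<omega>)) *\<^sub>R (A *v (xcheck \<omega> - xhat k \<omega>)))
    \<and> (AE \<omega> in M. cond_cov M F e \<omega>
                   = (\<Sum>t\<le>zeta \<tau> k \<omega>. matpow A t ** W ** transpose (matpow A t)))"
proof -
  interpret F: finite_measure_subalgebra M Fm
    by unfold_locales (rule subalg_Fm)
  interpret I: finite_measure_subalgebra M Ik
    by unfold_locales (rule subalg_Ik)
  have eeq: "(\<lambda>\<omega>. x (Suc k) \<omega> - xhat (Suc k) \<omega>) = ee" by (simp add: ee_def[abs_def])
  have c1: "AE \<omega> in M. real_cond_exp M Fm (\<lambda>\<omega>. ee \<omega> $ i) \<omega> = Dm \<omega> $ i" for i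
  proof (rule F.real_cond_exp_charact)
    fix G assume "G \<in> sets Fm"
    then show "set_lebesgue_integral M G (\<lambda>\<omega>. ee \<omega> $ i) = set_lebesgue_integral M G (\<lambda>\<omega>. Dm \<omega> $ i)"
      unfolding sl by (rule intDm)
  qed (auto intro: comp_int ee_int Dm_int comp_meas Dm_Fm)
  have c2: "AE \<omega> in M. real_cond_exp M Ik (\<lambda>\<omega>. x k \<omega> $ i) \<omega> = Dp \<omega> $ i" for i
  proof (rule I.real_cond_exp_charact)
    fix G assume "G \<in> sets Ik"
    then show "set_lebesgue_integral M G (\<lambda>\<omega>. x k \<omega> $ i) = set_lebesgue_integral M G (\<lambda>\<omega>. Dp \<omega> $ i)"
      unfolding sl by (rule intDp)
  qed (auto intro: comp_int[OF x_int[of k]] comp_int[OF Dp_int] comp_meas Dp_Ik)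
  have Yij_Fm: "(\<lambda>\<omega>. Yc (zeta \<tau> k \<omega>) $ i $ j) \<in> borel_measurable Fm" for i j
    by (rule cnt1[OF Ik_Fm[OF Ik_z[OF order_refl]]]) simp
  have c3: "AE \<omega> in M. real_cond_exp M Fm (\<lambda>\<omega>. Vv \<omega> $ i * Vv \<omega> $ j) \<omega> = Yc (zeta \<tau> k \<omega>) $ i $ j" for i j
  proof (rule F.real_cond_exp_charact)
    fix G assume "G \<in> sets Fm"
    then show "set_lebesgue_integral M G (\<lambda>\<omega>. Vv \<omega> $ i * Vv \<omega> $ j) = set_lebesgue_integral M G (\<lambda>\<omega>. Yc (zeta \<tau> k \<omega>) $ i $ j)"
      unfolding sl by (rule intVV)
  qed (auto intro: VV_int Y_int Yij_Fm)
  have ce: "cond_exp_vec M Fm ee \<omega> $ i = real_cond_exp M Fm (\<lambda>\<omega>. ee \<omega> $ i) \<omega>" for \<omega> i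
    by (simp add: cond_exp_vec_def)
  have eeM: "(\<lambda>\<omega>. ee \<omega> $ i) \<in> borel_measurable M" for i
    using comp_int[OF ee_int] by (rule borel_measurable_integrable)
  have VvM: "(\<lambda>\<omega>. Vv \<omega> $ i) \<in> borel_measurable M" for i
    using comp_int[OF Vv_int] by (rule borel_measurable_integrable)
  have c4: "AE \<omega> in M. real_cond_exp M Fm (\<lambda>\<omega>'. (ee \<omega>' $ i - cond_exp_vec M Fm ee \<omega>' $ i) * (ee \<omega>' $ j - cond_exp_vec M Fm ee \<omega>' $ j)) \<omega>
      = real_cond_exp M Fm (\<lambda>\<omega>. Vv \<omega> $ i * Vv \<omega> $ j) \<omega>" for i j
  proof (rule F.real_cond_exp_cong)
    show "AE \<omega> in M. (ee \<omega> $ i - cond_exp_vec M Fm ee \<omega> $ i) * (ee \<omega> $ j - cond_exp_vec M Fm ee \<omega> $ j) = Vv \<omega> $ i * Vv \<omega> $ j"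
      using c1[of i] c1[of j] AE_space
    proof (eventually_elim)
      case (elim \<omega>)
      then show ?case by (simp add: ce e_dec[OF elim(3)])
    qed
    have "(\<lambda>\<omega>. cond_exp_vec M Fm ee \<omega> $ i) \<in> borel_measurable M" for i
      unfolding ce by (rule borel_measurable_cond_exp2)
    then show "(\<lambda>\<omega>. (ee \<omega> $ i - cond_exp_vec M Fm ee \<omega> $ i) * (ee \<omega> $ j - cond_exp_vec M Fm ee \<omega> $ j)) \<in> borel_measurable M"
      using eeM by measurable
    show "(\<lambda>\<omega>. Vv \<omega> $ i * Vv \<omega> $ j) \<in> borel_measurable M"
      using VvM by measurable
  qed
  have part1: "AE \<omega> in M. cond_exp_vec M Fm ee \<omega> = (1 - of_bool (\<delta> k \<omega>)) *\<^sub>R (A *v (cond_exp_vec M Ik (x k) \<omega> - xhat k \<omega>))"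
  proof -
    have "AE \<omega> in M. \<forall>i. real_cond_exp M Fm (\<lambda>\<omega>. ee \<omega> $ i) \<omega> = Dm \<omega> $ i" by (rule AE_fin_all) (rule c1)
    moreover have "AE \<omega> in M. \<forall>i. real_cond_exp M Ik (\<lambda>\<omega>. x k \<omega> $ i) \<omega> = Dp \<omega> $ i" by (rule AE_fin_all) (rule c2)
    ultimately show ?thesis
    proof (eventually_elim)
      case (elim \<omega>)
      have a: "cond_exp_vec M Fm ee \<omega> = Dm \<omega>" using elim(1) by (simp add: vec_eq_iff ce)
      have b: "cond_exp_vec M Ik (x k) \<omega> = Dp \<omega>" using elim(2) by (simp add: vec_eq_iff cond_exp_vec_def)
      show ?case using a b by (simp add: Dm_def)
    qed
  qed
  have part2: "AE \<omega> in M. cond_cov M Fm ee \<omega> = (\<Sum>t\<le>zeta \<tau> k \<omega>. matpow A t ** W ** transpose (matpow A t))"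
  proof -
    have "AE \<omega> in M. \<forall>i. \<forall>j. real_cond_exp M Fm (\<lambda>\<omega>'. (ee \<omega>' $ i - cond_exp_vec M Fm ee \<omega>' $ i) * (ee \<omega>' $ j - cond_exp_vec M Fm ee \<omega>' $ j)) \<omega>
      = Yc (zeta \<tau> k \<omega>) $ i $ j"
    proof (rule AE_fin_all, rule AE_fin_all)
      fix i j
      show "AE \<omega> in M. real_cond_exp M Fm (\<lambda>\<omega>'. (ee \<omega>' $ i - cond_exp_vec M Fm ee \<omega>' $ i) * (ee \<omega>' $ j - cond_exp_vec M Fm ee \<omega>' $ j)) \<omega>
      = Yc (zeta \<tau> k \<omega>) $ i $ j"
        using c3[of i j] c4[of i j] by eventually_elim simp
    qed
    then show ?thesis
    proof (eventually_elim)
      case (elim \<omega>)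
      then show ?case by (simp add: vec_eq_iff cond_cov_def Yc_def)
    qed
  qed
  show ?thesis unfolding Let_def eeq
    using part1 part2 by (simp add: Fm_def Ik_def)
qed

end

theorem lemma4:
  fixes M :: "'a measure"
    and A :: "real^'n^'n" and B :: "real^'m^'n"
    and W M0 Q :: "real^'n^'n" and R :: "real^'m^'m" and m0 :: "real^'n"
    and N :: nat
    and x w xhat :: "nat \<Rightarrow> 'a \<Rightarrow> real^'n" and u :: "nat \<Rightarrow> 'a \<Rightarrow> real^'m"
    and \<tau> :: "nat \<Rightarrow> 'a \<Rightarrow> nat" and \<delta> :: "nat \<Rightarrow> 'a \<Rightarrow> bool" and \<nu> :: "nat \<Rightarrow> 'a \<Rightarrow> real"
    and k :: nat
  assumes P: "prob_space M"
    and W_pd: "pd_mat W" and Q_psd: "psd_mat Q" and R_pd: "pd_mat R"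
    and x0_gauss: "gaussian_vec M (x 0) m0 M0"
    and w_gauss: "\<forall>j. gaussian_vec M (w j) 0 W"
    and tau_meas: "\<forall>j. \<tau> j \<in> measurable M (count_space UNIV)"
    and tau0: "\<forall>\<omega>\<in>space M. \<tau> 0 \<omega> = 0"
    and nu_meas: "\<forall>j. \<nu> j \<in> borel_measurable M"
    and indep: "prob_space.indep_sets M (prim_sets M (x 0) w \<tau> \<nu>) UNIV"
    and dyn: "\<forall>j. \<forall>\<omega>\<in>space M. x (Suc j) \<omega> = A *v x j \<omega> + B *v u j \<omega> + w j \<omega>"
    and ctrl: "\<forall>j\<le>N. \<forall>\<omega>\<in>space M. u j \<omega> = - (gain_L A B Q R N j *v xhat j \<omega>)"
    and est0: "\<forall>\<omega>\<in>space M. xhat 0 \<omega> = m0"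
    and est: "\<forall>j. \<forall>\<omega>\<in>space M. xhat (Suc j) \<omega> =
                (if \<delta> j \<omega>
                 then matpow A (zeta \<tau> j \<omega> + 1) *v x (j - zeta \<tau> j \<omega>) \<omega>
                      + (\<Sum>t\<le>zeta \<tau> j \<omega>. matpow A t *v (B *v u (j - t) \<omega>))
                 else A *v xhat j \<omega> + B *v u j \<omega>)"
    and trig: "\<forall>j\<le>N. \<delta> j \<in> measurable
                  (sigma (space M) (info_sets M x u \<delta> \<tau> j \<union> rv_sets M borel (\<nu> j)))
                  (count_space UNIV)"
    and kN: "k \<le> N"
  shows "let F = sigma (space M) (info_sets M x u \<delta> \<tau> k \<union> rv_sets M (count_space UNIV) (\<delta> k));
             e = (\<lambda>\<omega>. x (Suc k) \<omega> - xhat (Suc k) \<omega>);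
             xcheck = cond_exp_vec M (info_alg M x u \<delta> \<tau> k) (x k)
         in (AE \<omega> in M. cond_exp_vec M F e \<omega>
                         = (1 - of_bool (\<delta> k \<omega>)) *\<^sub>R (A *v (xcheck \<omega> - xhat k \<omega>)))
          \<and> (AE \<omega> in M. cond_cov M F e \<omega>
                         = (\<Sum>t\<le>zeta \<tau> k \<omega>. matpow A t ** W ** transpose (matpow A t)))"
proof -
  have L: "lq M A B W M0 Q R m0 N x w xhat u \<tau> \<delta> \<nu> k"
    unfolding lq_def lq_axioms_def
    using P W_pd x0_gauss w_gauss tau_meas nu_meas indep dyn ctrl est0 est trig kN by blast
  interpret lq M A B W M0 Q R m0 N x w xhat u \<tau> \<delta> \<nu> k by (rule L)
  show ?thesis by (rule main)
qed

end
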